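(* Let $n\ge 2$, let $2\le d_1\le\cdots\le d_n$, let $\delta\ge 2$, $s\in\{1,\dots,n\}$ with $r:=d_s-\delta+1\ge 1$, and let $d=\sum_{i=1}^k(d_i-1)+\ell$ with $0\le k<n$ and $0<\ell\le d_{k+1}-1$ (empty sums are $0$ and empty products are $1$). Write $\kappa=\dim_{\mathbb F_q}\mathcal D^{(\delta,s)}_{\mathcal X}(d)$. Then $$(d_{k+1}-\ell)\prod_{i=k+2}^n d_i=W^{(1)}(\mathcal C_{\mathcal X}(d))\le W^{(1)}(\mathcal D^{(\delta,s)}_{\mathcal X}(d))\le m-\kappa-\left(\left\lceil\frac{\kappa}{r}\right\rceil-1\right)(\delta-1)+1 .$$ Moreover, if either (i) $k+2\le n$ and $d_{k+2}\le d_s$, or (ii) $d_s\le d_{k+1}$ and $0\le d_s-(d_{k+1}-\ell)<r$, then $W^{(1)}(\mathcal D^{(\delta,s)}_{\mathcal X}(d))=W^{(1)}(\mathcal C_{\mathcal X}(d))=(d_{k+1}-\ell)\prod_{i=k+2}^n d_i$.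
   Context: Let $\mathbb F_q$ be a finite field, $K_1,\dots,K_n\subseteq\mathbb F_q$ with $d_i=|K_i|$, and $\mathcal X=K_1\times\cdots\times K_n=\{\boldsymbol\alpha_1,\dots,\boldsymbol\alpha_m\}$ (a fixed enumeration), $m=\prod_{i=1}^n d_i$. Let $\Psi:\mathbb F_q[X_1,\dots,X_n]\to\mathbb F_q^m$, $f\mapsto(f(\boldsymbol\alpha_1),\dots,f(\boldsymbol\alpha_m))$. For $d\ge 0$, $\mathbb F_q[X_1,\dots,X_n]_{\le d}$ is the space of polynomials of degree at most $d$ together with $0$. The affine cartesian code is $\mathcal C_{\mathcal X}(d)=\Psi(\mathbb F_q[X_1,\dots,X_n]_{\le d})$. For integers $\delta\ge 2$ and $s\in\{1,\dots,n\}$, $\mathcal P^{(\delta,s)}_d$ is the set of $f\in\mathbb F_q[X_1,\dots,X_n]_{\le d}$ with $\deg_{X_s}f<d_s-\delta+1$, together with $0$; the $(\delta,s)$-quasi affine cartesian code is $\mathcal D^{(\delta,s)}_{\mathcal X}(d)=\Psi(\mathcal P^{(\delta,s)}_d)$. $W^{(1)}(C)$ denotes the minimum Hamming distance (minimum weight of a nonzero codeword) of a linear code $C$; $\lceil x\rceil$ is the least integer $\ge x$. *)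

theory Defs
  imports Complex_Main "HOL-Library.FuncSet" "HOL-Library.Function_Algebras"
begin

text \<open>Multivariate polynomials in the variables X_1,...,X_n over a field, represented
by their coefficient function on exponent vectors e :: nat => nat (e i = exponent of X_i).\<close>

definition is_mpoly :: "nat \<Rightarrow> ((nat \<Rightarrow> nat) \<Rightarrow> 'a::zero) \<Rightarrow> bool" where
  "is_mpoly n p \<longleftrightarrow> finite {e. p e \<noteq> 0} \<and>
     (\<forall>e. p e \<noteq> 0 \<longrightarrow> (\<forall>i. i \<notin> {1..n} \<longrightarrow> e i = 0))"

definition mono_deg :: "nat \<Rightarrow> (nat \<Rightarrow> nat) \<Rightarrow> nat" where
  "mono_deg n e = (\<Sum>i\<in>{1..n}. e i)"

definition mpoly_eval :: "nat \<Rightarrow> ((nat \<Rightarrow> nat) \<Rightarrow> 'a::comm_ring_1) \<Rightarrow> (nat \<Rightarrow> 'a) \<Rightarrow> 'a" where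
  "mpoly_eval n p x = (\<Sum>e\<in>{e. p e \<noteq> 0}. p e * (\<Prod>i\<in>{1..n}. x i ^ e i))"

definition polys_le :: "nat \<Rightarrow> nat \<Rightarrow> ((nat \<Rightarrow> nat) \<Rightarrow> 'a::zero) set" where
  "polys_le n d = {p. is_mpoly n p \<and> (\<forall>e. p e \<noteq> 0 \<longrightarrow> mono_deg n e \<le> d)}"

text \<open>P^{(delta,s)}_d: degree at most d and deg_{X_s} < d_s - delta + 1, with d_s = |K_s|.\<close>
definition quasi_polys :: "nat \<Rightarrow> (nat \<Rightarrow> 'a set) \<Rightarrow> nat \<Rightarrow> nat \<Rightarrow> nat \<Rightarrow> ((nat \<Rightarrow> nat) \<Rightarrow> 'a::zero) set" where
  "quasi_polys n K \<delta> s d = {p \<in> polys_le n d. \<forall>e. p e \<noteq> 0 \<longrightarrow> int (e s) < int (card (K s)) - int \<delta> + 1}"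

definition cart_points :: "nat \<Rightarrow> (nat \<Rightarrow> 'a set) \<Rightarrow> (nat \<Rightarrow> 'a) set" where
  "cart_points n K = PiE {1..n} K"

text \<open>Evaluation map Psi; a codeword is the vector of values indexed by the points of X
(set to 0 outside X).\<close>
definition Psi :: "nat \<Rightarrow> (nat \<Rightarrow> 'a set) \<Rightarrow> ((nat \<Rightarrow> nat) \<Rightarrow> 'a::comm_ring_1) \<Rightarrow> ((nat \<Rightarrow> 'a) \<Rightarrow> 'a)" where
  "Psi n K p = (\<lambda>x. if x \<in> cart_points n K then mpoly_eval n p x else 0)"

definition affine_cart_code :: "nat \<Rightarrow> (nat \<Rightarrow> 'a::comm_ring_1 set) \<Rightarrow> nat \<Rightarrow> ((nat \<Rightarrow> 'a) \<Rightarrow> 'a) set" where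
  "affine_cart_code n K d = Psi n K ` polys_le n d"

definition quasi_cart_code :: "nat \<Rightarrow> (nat \<Rightarrow> 'a::comm_ring_1 set) \<Rightarrow> nat \<Rightarrow> nat \<Rightarrow> nat \<Rightarrow> ((nat \<Rightarrow> 'a) \<Rightarrow> 'a) set" where
  "quasi_cart_code n K \<delta> s d = Psi n K ` quasi_polys n K \<delta> s d"

definition hweight :: "'b set \<Rightarrow> ('b \<Rightarrow> 'a::zero) \<Rightarrow> nat" where
  "hweight X c = card {x\<in>X. c x \<noteq> 0}"

definition min_dist :: "'b set \<Rightarrow> ('b \<Rightarrow> 'a::zero) set \<Rightarrow> nat" where
  "min_dist X C = Min {hweight X c | c. c \<in> C \<and> (\<exists>x\<in>X. c x \<noteq> 0)}"

definition code_dim :: "('b \<Rightarrow> 'a::field) set \<Rightarrow> nat" where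
  "code_dim C = vector_space.dim (\<lambda>(a::'a) v x. a * v x) C"

end

theory Submission
  imports Defs "HOL-Computational_Algebra.Polynomial" "HOL-Library.FuncSet"
begin


fun G :: "nat list \<Rightarrow> nat \<Rightarrow> nat" where
  "G [] e = 1"
| "G (a#L) e = (if a - 1 \<le> e then G L (e - (a - 1)) else (a - e) * prod_list L)"

lemma G_M: "\<forall>b\<in>set L. b \<ge> t+1 \<Longrightarrow> G L x \<le> (t+1) * G L (x+t)"
proof (induction L arbitrary: x)
  case Nil then show ?case by simp
next
  case (Cons b L')
  have b: "b \<ge> t+1" and L': "\<forall>c\<in>set L'. c \<ge> t+1" using Cons.prems by auto
  show ?case
  proof (cases "b - 1 \<le> x")
    case True
    then have "G (b#L') x = G L' (x - (b-1))" by simp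
    also have "\<dots> \<le> (t+1) * G L' (x - (b-1) + t)" using Cons.IH L' by blast
    also have "x - (b-1) + t = x + t - (b-1)" using True by simp
    also have "(t+1) * G L' (x + t - (b-1)) = (t+1) * G (b#L') (x+t)" using True by simp
    finally show ?thesis .
  next
    case False
    note F = False
    show ?thesis
    proof (cases "b - 1 \<le> x + t")
      case True
      define w where "w = x + t - (b - 1)"
      have wt: "w < t" using F True b unfolding w_def by simp
      have bx: "b - x = t + 1 - w" using F True b unfolding w_def by simp
      have lhs: "G (b#L') x = (b - x) * prod_list L'" using F by simp
      have rhs: "G (b#L') (x+t) = G L' w" using True unfolding w_def by simp
      show ?thesis
      proof (cases L')
        case Nil
        then show ?thesis using lhs rhs bx by simp
      next
        case (Cons c L'')
        have c: "c \<ge> t+1" using L' Cons by simp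
        have "\<not> (c - 1 \<le> w)" using wt c by simp
        then have GL: "G L' w = (c - w) * prod_list L''" using Cons by simp
        have "(t + 1 - w) * c \<le> (t+1) * (c - w)"
        proof -
          have "(t+1)*w \<le> c*w" using c by (intro mult_right_mono) auto
          then have "(t+1)*c - c*w \<le> (t+1)*c - (t+1)*w" by (rule diff_le_mono2)
          then show ?thesis by (simp add: diff_mult_distrib diff_mult_distrib2 mult.commute)
        qed
        then have "(t + 1 - w) * c * prod_list L'' \<le> (t+1) * (c - w) * prod_list L''"
          by (rule mult_right_mono) simp
        have "G (b#L') x = (t + 1 - w) * c * prod_list L''" using lhs bx Cons by simp
        also have "\<dots> \<le> (t+1) * (c - w) * prod_list L''" by fact
        also have "\<dots> = (t+1) * G (b#L') (x+t)" using rhs GL by (simp only: mult.assoc)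
        finally show ?thesis .
      qed
    next
      case False
      have lhs: "G (b#L') x = (b - x) * prod_list L'" using F by simp
      have rhs: "G (b#L') (x+t) = (b - (x+t)) * prod_list L'" using False by simp
      have "b - x \<le> (t+1) * (b - (x+t))"
      proof -
        define y where "y = b - (x+t)"
        have "b - x = y + t" "y \<ge> 1" using False b by (auto simp: y_def)
        moreover have "t \<le> t * y" using \<open>y \<ge> 1\<close> by simp
        moreover have "(t+1)*y = t*y + y" by simp
        ultimately have "b - x \<le> (t+1)*y" by linarith
        then show ?thesis unfolding y_def .
      qed
      then have "(b - x) * prod_list L' \<le> (t+1) * (b - (x+t)) * prod_list L'"
        by (rule mult_right_mono) simp
      then show ?thesis unfolding lhs rhs by (simp only: mult.assoc)
    qed
  qed
qed

lemma G_step: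
  assumes "a \<ge> 1" "\<forall>b\<in>set L. b \<ge> a" "j \<le> e" "j \<le> a - 1"
  shows "G (a#L) e \<le> (a - j) * G L (e - j)"
proof (cases "a - 1 \<le> e")
  case True
  define t where "t = a - 1 - j"
  have e1: "t + 1 = a - j" "e - (a-1) + t = e - j" using assms True by (auto simp: t_def)
  have "G (a#L) e = G L (e - (a-1))" using True by simp
  also have "\<dots> \<le> (t+1) * G L (e - (a-1) + t)"
    by (rule G_M) (use assms in \<open>auto simp: t_def\<close>)
  finally show ?thesis unfolding e1 .
next
  case False
  define u where "u = e - j"
  have lhs: "G (a#L) e = (a - e) * prod_list L" using False by simp
  show ?thesis
  proof (cases L)
    case Nil then show ?thesis using lhs assms by simp
  next
    case (Cons b L')
    have b: "b \<ge> a" using assms Cons by simp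
    have "\<not> (b - 1 \<le> u)" using b False assms by (simp add: u_def)
    then have "G L u = (b - u) * prod_list L'" using Cons by simp
    moreover have "(a - e) * b \<le> (a - j) * (b - u)"
    proof -
      define v where "v = a - e"
      have "a - j = v + u" "b - u \<ge> v" "u \<le> b" using False assms b by (auto simp: u_def v_def)
      then have e1: "(a - j) * (b - u) = v * (b - u) + u * (b - u)" by (simp add: algebra_simps)
      have e2: "v * (b - u) + u * v \<le> v * (b - u) + u * (b - u)"
        using \<open>b - u \<ge> v\<close> by simp
      have e3: "v * (b - u) + u * v = v * b" using \<open>u \<le> b\<close> by (simp add: algebra_simps diff_mult_distrib2)
      have "v * b \<le> (a - j) * (b - u)" using e1 e2 e3 by linarith
      then show ?thesis by (simp add: v_def mult.commute)
    qed
    ultimately have le: "(a - e) * b * prod_list L' \<le> (a - j) * G L u"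
      by (metis mult.assoc mult_right_mono zero_le)
    have "G (a#L) e = (a - e) * prod_list L" by (rule lhs)
    also have "\<dots> = (a - e) * b * prod_list L'" using Cons by simp
    also note le
    finally show ?thesis unfolding u_def .
  qed
qed

lemma G_zero: "\<forall>b\<in>set L. b \<ge> 1 \<Longrightarrow> G L 0 = prod_list L"
  by (induction L) auto

lemma G_formula:
  assumes "\<forall>b\<in>set L. b \<ge> 1" "k < length L" "0 < l" "l \<le> L!k - 1"
  shows "G L (sum_list (map (\<lambda>x. x - 1) (take k L)) + l) = (L!k - l) * prod_list (drop (Suc k) L)"
  using assms
proof (induction k arbitrary: L)
  case 0
  then obtain a L' where L: "L = a # L'" by (cases L) auto
  then show ?case using 0 G_zero[of L'] by auto
next
  case (Suc k)
  then obtain a L' where L: "L = a # L'" by (cases L) auto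
  have "G L' (sum_list (map (\<lambda>x. x - 1) (take k L')) + l) = (L'!k - l) * prod_list (drop (Suc k) L')"
    using Suc L by auto
  then show ?case using L by simp
qed


definition mon :: "nat set \<Rightarrow> (nat\<Rightarrow>nat) \<Rightarrow> (nat \<Rightarrow> 'a::comm_ring_1) \<Rightarrow> 'a" where
  "mon I e x = (\<Prod>i\<in>I. x i ^ e i)"
definition ev :: "nat set \<Rightarrow> ((nat\<Rightarrow>nat) \<Rightarrow> 'a::comm_ring_1) \<Rightarrow> (nat \<Rightarrow> 'a) \<Rightarrow> 'a" where
  "ev I p x = (\<Sum>e\<in>{e. p e \<noteq> 0}. p e * mon I e x)"
definition fsupp :: "((nat\<Rightarrow>nat) \<Rightarrow> 'a::zero) \<Rightarrow> bool" where
  "fsupp p \<longleftrightarrow> finite {e. p e \<noteq> 0}"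
definition degle :: "nat set \<Rightarrow> ((nat\<Rightarrow>nat) \<Rightarrow> 'a::zero) \<Rightarrow> nat \<Rightarrow> bool" where
  "degle I p d \<longleftrightarrow> (\<forall>e. p e \<noteq> 0 \<longrightarrow> (\<Sum>i\<in>I. e i) \<le> d)"
definition reduced :: "nat set \<Rightarrow> (nat \<Rightarrow> 'b set) \<Rightarrow> ((nat\<Rightarrow>nat) \<Rightarrow> 'a::zero) \<Rightarrow> bool" where
  "reduced I K p \<longleftrightarrow> (\<forall>e. p e \<noteq> 0 \<longrightarrow> (\<forall>i\<in>I. e i < card (K i)))"

lemma ev_superset:
  assumes "finite S" "{e. p e \<noteq> 0} \<subseteq> S"
  shows "ev I p x = (\<Sum>e\<in>S. p e * mon I e x)"
  unfolding ev_def using assms by (intro sum.mono_neutral_left) auto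

lemma ev_lincomb:
  fixes q :: "'k \<Rightarrow> (nat\<Rightarrow>nat) \<Rightarrow> 'a::comm_ring_1"
  assumes "finite A" "\<And>k. k \<in> A \<Longrightarrow> fsupp (q k)"
  shows "fsupp (\<lambda>e. \<Sum>k\<in>A. c k * q k e)"
    and "ev I (\<lambda>e. \<Sum>k\<in>A. c k * q k e) x = (\<Sum>k\<in>A. c k * ev I (q k) x)"
proof -
  define S where "S = (\<Union>k\<in>A. {e. q k e \<noteq> 0})"
  have fS: "finite S" using assms unfolding S_def fsupp_def by auto
  have sub: "{e. (\<Sum>k\<in>A. c k * q k e) \<noteq> 0} \<subseteq> S"
  proof
    fix e assume "e \<in> {e. (\<Sum>k\<in>A. c k * q k e) \<noteq> 0}"
    then obtain k where "k \<in> A" "c k * q k e \<noteq> 0" using sum.neutral by (metis (mono_tags, lifting) mem_Collect_eq)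
    then show "e \<in> S" unfolding S_def by (auto intro!: bexI[of _ k])
  qed
  then show "fsupp (\<lambda>e. \<Sum>k\<in>A. c k * q k e)" unfolding fsupp_def using fS finite_subset by blast
  have "ev I (\<lambda>e. \<Sum>k\<in>A. c k * q k e) x = (\<Sum>e\<in>S. (\<Sum>k\<in>A. c k * q k e) * mon I e x)"
    by (rule ev_superset[OF fS sub])
  also have "\<dots> = (\<Sum>e\<in>S. \<Sum>k\<in>A. c k * (q k e * mon I e x))"
    by (simp add: sum_distrib_right mult.assoc)
  also have "\<dots> = (\<Sum>k\<in>A. \<Sum>e\<in>S. c k * (q k e * mon I e x))"
    by (rule sum.swap)
  also have "\<dots> = (\<Sum>k\<in>A. c k * (\<Sum>e\<in>S. q k e * mon I e x))"
    by (simp add: sum_distrib_left)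
  also have "\<dots> = (\<Sum>k\<in>A. c k * ev I (q k) x)"
  proof (rule sum.cong[OF refl])
    fix k assume "k \<in> A"
    then have "{e. q k e \<noteq> 0} \<subseteq> S" unfolding S_def by auto
    then show "c k * (\<Sum>e\<in>S. q k e * mon I e x) = c k * ev I (q k) x"
      using ev_superset[OF fS] by metis
  qed
  finally show "ev I (\<lambda>e. \<Sum>k\<in>A. c k * q k e) x = (\<Sum>k\<in>A. c k * ev I (q k) x)" .
qed

lemma Upow:
  fixes A :: "'a::field set"
  assumes "finite A" "A \<noteq> {}"
  shows "\<exists>c. \<forall>t\<in>A. t ^ card A = (\<Sum>k<card A. c k * t ^ k)"
proof -
  define a where "a = card A"
  have a1: "a \<ge> 1" using assms unfolding a_def by (simp add: Suc_leI card_gt_0_iff)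
  define Z where "Z = (\<Prod>c\<in>A. [:-c, 1:])"
  define R where "R = monom 1 a - Z"
  have degZ: "degree Z = a" unfolding Z_def a_def
    by (subst degree_prod_eq_sum_degree) auto
  have "lead_coeff Z = 1" unfolding Z_def lead_coeff_prod by simp
  then have lcZ: "coeff Z a = 1" using degZ by simp
  have "\<forall>i>a - 1. coeff R i = 0"
  proof (intro allI impI)
    fix i assume "i > a - 1"
    then have "i \<ge> a" using a1 by simp
    then show "coeff R i = 0" unfolding R_def
      using lcZ degZ coeff_eq_0[of Z i] by (cases "i = a") (auto simp: coeff_monom)
  qed
  then have degR: "degree R \<le> a - 1" by (rule degree_le)
  have "\<forall>t\<in>A. t ^ a = (\<Sum>k<a. coeff R k * t ^ k)"
  proof
    fix t assume "t \<in> A"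
    then have "poly Z t = 0" unfolding Z_def poly_prod using assms by (auto intro: prod_zero)
    then have "t ^ a = poly R t" unfolding R_def by (simp add: poly_monom)
    also have "\<dots> = (\<Sum>k\<le>degree R. coeff R k * t ^ k)" by (rule poly_altdef)
    also have "\<dots> = (\<Sum>k<a. coeff R k * t ^ k)"
      using degR a1 by (intro sum.mono_neutral_left) (auto simp: coeff_eq_0)
    finally show "t ^ a = (\<Sum>k<a. coeff R k * t ^ k)" .
  qed
  then show ?thesis unfolding a_def by blast
qed


lemma mon_split:
  assumes "finite I" "i \<in> I"
  shows "mon I e x = x i ^ e i * (\<Prod>j\<in>I-{i}. x j ^ e j)"
  unfolding mon_def using assms by (simp add: prod.remove)

lemma sum_split:
  assumes "finite I" "i \<in> I"
  shows "(\<Sum>j\<in>I. e j) = e i + (\<Sum>j\<in>I-{i}. (e j::nat))"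
  using assms by (simp add: sum.remove)

lemma reduce_mon:
  fixes K :: "nat \<Rightarrow> 'a::field set"
  assumes fin: "finite I" and KI: "\<forall>i\<in>I. finite (K i) \<and> K i \<noteq> {}"
  shows "\<exists>q::(nat\<Rightarrow>nat)\<Rightarrow>'a. fsupp q \<and> degle I q (\<Sum>i\<in>I. e i) \<and> reduced I K q \<and>
           (\<forall>x\<in>PiE I K. ev I q x = mon I e x)"
proof (induction "\<Sum>i\<in>I. e i" arbitrary: e rule: less_induct)
  case less
  show ?case
  proof (cases "\<forall>i\<in>I. e i < card (K i)")
    case True
    define q :: "(nat\<Rightarrow>nat)\<Rightarrow>'a" where "q = (\<lambda>e'. if e' = e then 1 else 0)"
    have S: "{e'. q e' \<noteq> 0} = {e}" unfolding q_def by auto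
    have "fsupp q" unfolding fsupp_def S by simp
    moreover have "degle I q (\<Sum>i\<in>I. e i)" unfolding degle_def q_def by auto
    moreover have "reduced I K q" unfolding reduced_def q_def using True by auto
    moreover have "\<forall>x\<in>PiE I K. ev I q x = mon I e x" unfolding ev_def S by (simp add: q_def)
    ultimately show ?thesis by blast
  next
    case False
    then obtain i where i: "i \<in> I" "e i \<ge> card (K i)" by (auto simp: not_less)
    define a where "a = card (K i)"
    obtain c where c: "\<forall>t\<in>K i. t ^ a = (\<Sum>k<a. c k * t ^ k)"
      using Upow[of "K i"] KI i unfolding a_def by blast
    define ek where "ek k = e(i := e i - a + k)" for k
    have deg: "(\<Sum>j\<in>I. ek k j) < (\<Sum>j\<in>I. e j)" if "k < a" for k
    proof -
      have "(\<Sum>j\<in>I-{i}. ek k j) = (\<Sum>j\<in>I-{i}. e j)" unfolding ek_def by (intro sum.cong) auto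
      then show ?thesis using sum_split[OF fin i(1), of "ek k"] sum_split[OF fin i(1), of e] that i(2)
        unfolding a_def ek_def by simp
    qed
    have "\<forall>k\<in>{..<a}. \<exists>q::(nat\<Rightarrow>nat)\<Rightarrow>'a. fsupp q \<and> degle I q (\<Sum>j\<in>I. ek k j) \<and> reduced I K q \<and>
           (\<forall>x\<in>PiE I K. ev I q x = mon I (ek k) x)"
      using less deg by blast
    then obtain Q where Q: "\<And>k. k \<in> {..<a} \<Longrightarrow> fsupp (Q k) \<and> degle I (Q k) (\<Sum>j\<in>I. ek k j) \<and> reduced I K (Q k) \<and>
           (\<forall>x\<in>PiE I K. ev I (Q k) x = mon I (ek k) x)"
      by metis
    define q where "q = (\<lambda>e'. \<Sum>k<a. c k * Q k e')"
    have fq: "fsupp q" unfolding q_def by (rule ev_lincomb(1)) (use Q in auto)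
    have nz: "\<exists>k<a. Q k e' \<noteq> 0" if "q e' \<noteq> 0" for e'
    proof (rule ccontr)
      assume "\<not> ?thesis"
      then have "q e' = 0" unfolding q_def by simp
      then show False using that by simp
    qed
    have "degle I q (\<Sum>i\<in>I. e i)" unfolding degle_def
    proof (intro allI impI)
      fix e' assume "q e' \<noteq> 0"
      then obtain k where "k < a" "Q k e' \<noteq> 0" using nz by blast
      then have "(\<Sum>j\<in>I. e' j) \<le> (\<Sum>j\<in>I. ek k j)" using Q[of k] unfolding degle_def by auto
      then show "(\<Sum>j\<in>I. e' j) \<le> (\<Sum>j\<in>I. e j)" using deg[OF \<open>k < a\<close>] by simp
    qed
    moreover have "reduced I K q" unfolding reduced_def
    proof (intro allI impI)
      fix e' assume "q e' \<noteq> 0"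
      then obtain k where "k < a" "Q k e' \<noteq> 0" using nz by blast
      then show "\<forall>j\<in>I. e' j < card (K j)" using Q[of k] unfolding reduced_def by auto
    qed
    moreover have "\<forall>x\<in>PiE I K. ev I q x = mon I e x"
    proof
      fix x assume x: "x \<in> PiE I K"
      have xi: "x i \<in> K i" using x i by auto
      have "ev I q x = (\<Sum>k<a. c k * ev I (Q k) x)" unfolding q_def
        by (rule ev_lincomb(2)) (use Q in auto)
      also have "\<dots> = (\<Sum>k<a. c k * mon I (ek k) x)" using Q x by auto
      also have "\<dots> = (\<Sum>k<a. c k * (x i ^ (e i - a) * x i ^ k * (\<Prod>j\<in>I-{i}. x j ^ e j)))"
      proof (intro sum.cong refl)
        fix k assume "k \<in> {..<a}"
        have "(\<Prod>j\<in>I-{i}. x j ^ ek k j) = (\<Prod>j\<in>I-{i}. x j ^ e j)" unfolding ek_def by (intro prod.cong) auto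
        then show "c k * mon I (ek k) x = c k * (x i ^ (e i - a) * x i ^ k * (\<Prod>j\<in>I-{i}. x j ^ e j))"
          using mon_split[OF fin i(1), of "ek k" x] by (simp add: ek_def power_add)
      qed
      also have "\<dots> = x i ^ (e i - a) * (\<Sum>k<a. c k * x i ^ k) * (\<Prod>j\<in>I-{i}. x j ^ e j)"
        by (simp add: sum_distrib_left sum_distrib_right algebra_simps)
      also have "\<dots> = x i ^ (e i - a) * x i ^ a * (\<Prod>j\<in>I-{i}. x j ^ e j)" using c xi by simp
      also have "\<dots> = mon I e x" using mon_split[OF fin i(1), of e x] i(2)
        by (simp add: a_def power_add[symmetric])
      finally show "ev I q x = mon I e x" .
    qed
    ultimately show ?thesis using fq by blast
  qed
qed

lemma reduce_poly:
  fixes K :: "nat \<Rightarrow> 'a::field set" and p :: "(nat\<Rightarrow>nat)\<Rightarrow>'a"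
  assumes fin: "finite I" and KI: "\<forall>i\<in>I. finite (K i) \<and> K i \<noteq> {}"
    and fp: "fsupp p" and dp: "degle I p d"
  shows "\<exists>q::(nat\<Rightarrow>nat)\<Rightarrow>'a. fsupp q \<and> degle I q d \<and> reduced I K q \<and>
           (\<forall>x\<in>PiE I K. ev I q x = ev I p x)"
proof -
  define S where "S = {e. p e \<noteq> 0}"
  have fS: "finite S" using fp unfolding fsupp_def S_def .
  have "\<forall>e\<in>S. \<exists>q::(nat\<Rightarrow>nat)\<Rightarrow>'a. fsupp q \<and> degle I q (\<Sum>i\<in>I. e i) \<and> reduced I K q \<and>
           (\<forall>x\<in>PiE I K. ev I q x = mon I e x)"
    using reduce_mon[OF fin KI] by blast
  then obtain Q where Q: "\<And>e. e \<in> S \<Longrightarrow> fsupp (Q e) \<and> degle I (Q e) (\<Sum>i\<in>I. e i) \<and> reduced I K (Q e) \<and>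
           (\<forall>x\<in>PiE I K. ev I (Q e) x = mon I e x)"
    by metis
  define q where "q = (\<lambda>e'. \<Sum>e\<in>S. p e * Q e e')"
  have fq: "fsupp q" unfolding q_def by (rule ev_lincomb(1)) (use Q fS in auto)
  have nz: "\<exists>e\<in>S. Q e e' \<noteq> 0" if "q e' \<noteq> 0" for e'
  proof (rule ccontr)
    assume "\<not> ?thesis"
    then have "q e' = 0" unfolding q_def by simp
    then show False using that by simp
  qed
  have "degle I q d" unfolding degle_def
  proof (intro allI impI)
    fix e' assume "q e' \<noteq> 0"
    then obtain e where "e \<in> S" "Q e e' \<noteq> 0" using nz by blast
    then show "(\<Sum>j\<in>I. e' j) \<le> d" using Q[of e] dp unfolding degle_def S_def by fastforce
  qed
  moreover have "reduced I K q" unfolding reduced_def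
  proof (intro allI impI)
    fix e' assume "q e' \<noteq> 0"
    then obtain e where "e \<in> S" "Q e e' \<noteq> 0" using nz by blast
    then show "\<forall>j\<in>I. e' j < card (K j)" using Q[of e] unfolding reduced_def by auto
  qed
  moreover have "\<forall>x\<in>PiE I K. ev I q x = ev I p x"
  proof
    fix x assume x: "x \<in> PiE I K"
    have "ev I q x = (\<Sum>e\<in>S. p e * ev I (Q e) x)" unfolding q_def
      by (rule ev_lincomb(2)) (use Q fS in auto)
    also have "\<dots> = (\<Sum>e\<in>S. p e * mon I e x)" using Q x by auto
    also have "\<dots> = ev I p x" unfolding ev_def S_def ..
    finally show "ev I q x = ev I p x" .
  qed
  ultimately show ?thesis using fq by blast
qed


lemma Ucount:
  fixes A :: "'a::field set" and c :: "nat \<Rightarrow> 'a"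
  assumes fA: "finite A" and cj: "c j0 \<noteq> 0" and hi: "\<forall>k. j0 < k \<longrightarrow> k < N \<longrightarrow> c k = 0" and jN: "j0 < N"
  shows "card A - j0 \<le> card {t\<in>A. (\<Sum>k<N. c k * t ^ k) \<noteq> 0}"
proof -
  define P where "P = (\<Sum>k<N. monom (c k) k)"
  have ev: "poly P t = (\<Sum>k<N. c k * t ^ k)" for t unfolding P_def by (simp add: poly_sum poly_monom)
  have co: "coeff P k = (if k < N then c k else 0)" for k
    unfolding P_def coeff_sum by (simp add: coeff_monom)
  have P0: "P \<noteq> 0" using co[of j0] cj jN by auto
  have "\<forall>i>j0. coeff P i = 0" using co hi by auto
  then have dP: "degree P \<le> j0" by (rule degree_le)
  have "card {t\<in>A. poly P t = 0} \<le> card {t. poly P t = 0}"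
    using poly_roots_finite[OF P0] by (intro card_mono) auto
  also have "\<dots> \<le> j0" using card_poly_roots_bound[OF P0] dP by simp
  finally have z: "card {t\<in>A. poly P t = 0} \<le> j0" .
  have "card A = card {t\<in>A. poly P t = 0} + card {t\<in>A. poly P t \<noteq> 0}"
    using fA by (subst card_Un_disjoint[symmetric]) (auto intro: arg_cong[where f=card])
  then show ?thesis using z unfolding ev by simp
qed

lemma pie_split:
  assumes "i \<in> I"
  shows "bij_betw (\<lambda>(y,t). y(i:=t)) (PiE (I-{i}) K \<times> K i) (PiE I K)"
proof (rule bij_betwI[where g="\<lambda>x. (x(i:=undefined), x i)"])
  show "(\<lambda>(y, t). y(i := t)) \<in> PiE (I - {i}) K \<times> K i \<rightarrow> PiE I K"
    using assms by (auto simp: PiE_def Pi_def extensional_def)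
  show "(\<lambda>x. (x(i := undefined), x i)) \<in> PiE I K \<rightarrow> PiE (I - {i}) K \<times> K i"
    using assms by (auto simp: PiE_def Pi_def extensional_def)
  show "(\<lambda>x. (x(i := undefined), x i)) ((\<lambda>(y, t). y(i := t)) yt) = yt"
    if "yt \<in> PiE (I - {i}) K \<times> K i" for yt
    using that by (cases yt) (auto simp: PiE_def extensional_def fun_eq_iff)
  show "(\<lambda>(y, t). y(i := t)) (x(i := undefined), x i) = x" if "x \<in> PiE I K" for x
    by simp
qed

definition slice :: "((nat\<Rightarrow>nat) \<Rightarrow> 'a::zero) \<Rightarrow> nat \<Rightarrow> nat \<Rightarrow> (nat\<Rightarrow>nat) \<Rightarrow> 'a" where
  "slice p i j = (\<lambda>e. if e i = j then p e else 0)"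

lemma fsupp_slice: "fsupp p \<Longrightarrow> fsupp (slice p i j)"
  unfolding fsupp_def slice_def by (rule finite_subset[rotated]) auto

lemma ev_slice:
  fixes p :: "(nat\<Rightarrow>nat) \<Rightarrow> 'a::comm_ring_1"
  assumes fin: "finite I" and i: "i \<in> I" and fp: "fsupp p" and bd: "\<forall>e. p e \<noteq> 0 \<longrightarrow> e i < N"
  shows "ev I p (y(i:=t)) = (\<Sum>j<N. ev (I-{i}) (slice p i j) y * t ^ j)"
proof -
  define S where "S = {e. p e \<noteq> 0}"
  have fS: "finite S" using fp unfolding fsupp_def S_def .
  have m: "mon I e (y(i:=t)) = t ^ e i * mon (I-{i}) e y" for e
  proof -
    have "(\<Prod>j\<in>I-{i}. (y(i:=t)) j ^ e j) = mon (I-{i}) e y" unfolding mon_def by (intro prod.cong) auto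
    then show ?thesis using mon_split[OF fin i, of e "y(i:=t)"] by simp
  qed
  have "(\<Sum>j<N. ev (I-{i}) (slice p i j) y * t ^ j)
      = (\<Sum>j<N. (\<Sum>e\<in>S. slice p i j e * mon (I-{i}) e y) * t ^ j)"
    by (intro sum.cong refl, subst ev_superset[OF fS]) (auto simp: S_def slice_def)
  also have "\<dots> = (\<Sum>j<N. \<Sum>e\<in>S. slice p i j e * mon (I-{i}) e y * t ^ j)"
    by (simp add: sum_distrib_right)
  also have "\<dots> = (\<Sum>e\<in>S. \<Sum>j<N. slice p i j e * mon (I-{i}) e y * t ^ j)"
    by (rule sum.swap)
  also have "\<dots> = (\<Sum>e\<in>S. p e * mon I e (y(i:=t)))"
  proof (intro sum.cong refl)
    fix e assume "e \<in> S"
    then have "e i < N" using bd unfolding S_def by auto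
    then have "(\<Sum>j<N. slice p i j e * mon (I-{i}) e y * t ^ j) = (\<Sum>j\<in>{e i}. slice p i j e * mon (I-{i}) e y * t ^ j)"
      by (intro sum.mono_neutral_right) (auto simp: slice_def)
    also have "\<dots> = p e * mon I e (y(i:=t))" by (simp add: slice_def m)
    finally show "(\<Sum>j<N. slice p i j e * mon (I-{i}) e y * t ^ j) = p e * mon I e (y(i:=t))" .
  qed
  also have "\<dots> = ev I p (y(i:=t))" unfolding ev_def S_def ..
  finally show ?thesis ..
qed


lemma AF:
  fixes K :: "nat \<Rightarrow> 'a::field set" and p :: "(nat\<Rightarrow>nat)\<Rightarrow>'a"
  assumes "finite I" "\<forall>i\<in>I. finite (K i) \<and> card (K i) \<ge> 1"
    "\<forall>i\<in>I. \<forall>i'\<in>I. i \<le> i' \<longrightarrow> card (K i) \<le> card (K i')"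
    "fsupp p" "degle I p d" "reduced I K p" "\<exists>x\<in>PiE I K. ev I p x \<noteq> 0"
  shows "G (map (\<lambda>i. card (K i)) (sorted_list_of_set I)) d \<le> card {x\<in>PiE I K. ev I p x \<noteq> 0}"
  using assms
proof (induction "card I" arbitrary: I p d)
  case 0
  then have I: "I = {}" by simp
  then have "{x\<in>PiE I K. ev I p x \<noteq> 0} = {\<lambda>_. undefined}" using 0 by auto
  then show ?case using I by simp
next
  case (Suc nn)
  note fin = Suc.prems(1)
  have Ine: "I \<noteq> {}" using Suc.hyps by auto
  define i where "i = Min I"
  define J where "J = I - {i}"
  have iI: "i \<in> I" unfolding i_def using fin Ine by simp
  have sl: "sorted_list_of_set I = i # sorted_list_of_set J"
    unfolding i_def J_def by (rule sorted_list_of_set_nonempty[OF fin Ine])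
  define a where "a = card (K i)"
  define L where "L = map (\<lambda>i. card (K i)) (sorted_list_of_set J)"
  have finJ: "finite J" using fin unfolding J_def by simp
  have cJ: "nn = card J" using Suc.hyps iI fin unfolding J_def by simp
  have a1: "a \<ge> 1" using Suc.prems(2) iI unfolding a_def by simp
  have La: "\<forall>b\<in>set L. b \<ge> a"
  proof
    fix b assume "b \<in> set L"
    then obtain i' where "i' \<in> J" "b = card (K i')" unfolding L_def using finJ by auto
    then show "a \<le> b" using Suc.prems(3) iI fin unfolding a_def J_def i_def by auto
  qed
  define f where "f j = slice p i j" for j
  have redI: "\<forall>e. p e \<noteq> 0 \<longrightarrow> e i < a" using Suc.prems(6) iI unfolding reduced_def a_def by auto
  have evs: "ev I p (y(i:=t)) = (\<Sum>j<a. ev J (f j) y * t ^ j)" for y t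
    unfolding f_def J_def by (rule ev_slice[OF fin iI Suc.prems(4) redI])
  have ff: "fsupp (f j)" for j unfolding f_def by (rule fsupp_slice[OF Suc.prems(4)])
  have fred: "reduced J K (f j)" for j using Suc.prems(6) unfolding reduced_def f_def slice_def J_def by auto
  have fdeg: "degle J (f j) (d - j)" for j
    unfolding degle_def
  proof (intro allI impI)
    fix e assume "f j e \<noteq> 0"
    then have "e i = j" "p e \<noteq> 0" unfolding f_def slice_def by (auto split: if_splits)
    then have "(\<Sum>k\<in>I. e k) \<le> d" using Suc.prems(5) unfolding degle_def by auto
    then show "(\<Sum>k\<in>J. e k) \<le> d - j" using sum_split[OF fin iI, of e] \<open>e i = j\<close> unfolding J_def by simp
  qed
  define Js where "Js = {j. j < a \<and> (\<exists>y\<in>PiE J K. ev J (f j) y \<noteq> 0)}"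
  obtain x where x: "x \<in> PiE I K" "ev I p x \<noteq> 0" using Suc.prems(7) by blast
  have xs: "x = (x(i:=undefined))(i := x i)" by simp
  have xJ: "x(i:=undefined) \<in> PiE J K" using x(1) unfolding J_def by (auto simp: PiE_def extensional_def)
  have "ev I p x = (\<Sum>j<a. ev J (f j) (x(i:=undefined)) * x i ^ j)" using evs[of "x(i:=undefined)" "x i"] by simp
  then obtain j where "j < a" "ev J (f j) (x(i:=undefined)) \<noteq> 0" using x(2)
    by (metis (no_types, lifting) lessThan_iff mult_zero_left sum.neutral)
  then have "j \<in> Js" unfolding Js_def using xJ by blast
  then have Jsne: "Js \<noteq> {}" by blast
  have finJs: "finite Js" unfolding Js_def by simp
  define j0 where "j0 = Max Js"
  have j0Js: "j0 \<in> Js" unfolding j0_def using finJs Jsne by simp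
  have j0a: "j0 < a" using j0Js unfolding Js_def by simp
  have hi: "\<forall>k. j0 < k \<longrightarrow> k < a \<longrightarrow> (\<forall>y\<in>PiE J K. ev J (f k) y = 0)"
  proof (intro allI impI ballI)
    fix k y assume "j0 < k" "k < a" "y \<in> PiE J K"
    show "ev J (f k) y = 0"
    proof (rule ccontr)
      assume "ev J (f k) y \<noteq> 0"
      then have "k \<in> Js" unfolding Js_def using \<open>k < a\<close> \<open>y \<in> PiE J K\<close> by blast
      then have "k \<le> j0" unfolding j0_def using finJs by simp
      then show False using \<open>j0 < k\<close> by simp
    qed
  qed
  obtain y0 where y0: "y0 \<in> PiE J K" "ev J (f j0) y0 \<noteq> 0" using j0Js unfolding Js_def by blast
  have j0d: "j0 \<le> d"
  proof -
    obtain e where "f j0 e \<noteq> 0" using y0(2) unfolding ev_def by (metis (mono_tags, lifting) mem_Collect_eq mult_zero_left sum.neutral)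
    then have "e i = j0" "p e \<noteq> 0" unfolding f_def slice_def by (auto split: if_splits)
    then have "(\<Sum>k\<in>I. e k) \<le> d" using Suc.prems(5) unfolding degle_def by auto
    then show ?thesis using sum_split[OF fin iI, of e] \<open>e i = j0\<close> by simp
  qed
  define Y0 where "Y0 = {y\<in>PiE J K. ev J (f j0) y \<noteq> 0}"
  have IH: "G L (d - j0) \<le> card Y0"
    unfolding L_def Y0_def
  proof (rule Suc.hyps(1)[OF cJ finJ])
    show "\<forall>i\<in>J. finite (K i) \<and> 1 \<le> card (K i)" using Suc.prems(2) unfolding J_def by auto
    show "\<forall>i\<in>J. \<forall>i'\<in>J. i \<le> i' \<longrightarrow> card (K i) \<le> card (K i')" using Suc.prems(3) unfolding J_def by auto
  qed (use ff fdeg fred y0 in auto)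
  define T where "T y = {t\<in>K i. ev I p (y(i:=t)) \<noteq> 0}" for y
  have Tb: "a - j0 \<le> card (T y)" if "y \<in> Y0" for y
  proof -
    have "card (K i) - j0 \<le> card {t\<in>K i. (\<Sum>k<a. ev J (f k) y * t ^ k) \<noteq> 0}"
      by (rule Ucount) (use Suc.prems(2) iI that hi j0a in \<open>auto simp: Y0_def\<close>)
    then show ?thesis unfolding T_def a_def evs .
  qed
  have "finite (PiE J K)" using Suc.prems(2) finJ unfolding J_def by (intro finite_PiE) auto
  then have finY0: "finite Y0" unfolding Y0_def by simp
  have finT: "finite (T y)" for y unfolding T_def using Suc.prems(2) iI by auto
  have "G (a#L) d \<le> (a - j0) * G L (d - j0)"
    by (rule G_step[OF a1 La j0d]) (use j0a in simp)
  also have "\<dots> \<le> (a - j0) * card Y0" using IH by simp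
  also have "\<dots> = (\<Sum>y\<in>Y0. a - j0)" by simp
  also have "\<dots> \<le> (\<Sum>y\<in>Y0. card (T y))" by (rule sum_mono) (rule Tb)
  also have "\<dots> = card (Sigma Y0 T)" using finY0 finT by simp
  also have "\<dots> = card ((\<lambda>(y,t). y(i:=t)) ` Sigma Y0 T)"
  proof (rule card_image[symmetric])
    have "Sigma Y0 T \<subseteq> PiE J K \<times> K i" unfolding Y0_def T_def by auto
    then show "inj_on (\<lambda>(y,t). y(i:=t)) (Sigma Y0 T)"
      using pie_split[OF iI, of K] unfolding J_def bij_betw_def by (auto intro: inj_on_subset)
  qed
  also have "\<dots> \<le> card {x\<in>PiE I K. ev I p x \<noteq> 0}"
  proof (rule card_mono)
    have "finite (PiE I K)" using Suc.prems(2) fin by (intro finite_PiE) auto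
    then show "finite {x\<in>PiE I K. ev I p x \<noteq> 0}" by simp
    have "Sigma Y0 T \<subseteq> PiE J K \<times> K i" unfolding Y0_def T_def by auto
    then have "(\<lambda>(y,t). y(i:=t)) ` Sigma Y0 T \<subseteq> (\<lambda>(y,t). y(i:=t)) ` (PiE J K \<times> K i)"
      by (rule image_mono)
    also have "\<dots> = PiE I K" using pie_split[OF iI, of K] unfolding J_def bij_betw_def by simp
    finally have "(\<lambda>(y,t). y(i:=t)) ` Sigma Y0 T \<subseteq> PiE I K" .
    then show "(\<lambda>(y,t). y(i:=t)) ` Sigma Y0 T \<subseteq> {x\<in>PiE I K. ev I p x \<noteq> 0}"
      unfolding T_def by auto
  qed
  finally show ?case unfolding sl L_def a_def by simp
qed


lemma prod_poly:
  fixes g :: "nat \<Rightarrow> 'a::field poly"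
  assumes fin: "finite I"
  shows "\<exists>p. fsupp p \<and> (\<forall>e. p e \<noteq> 0 \<longrightarrow> (\<forall>i\<in>I. e i \<le> degree (g i)) \<and> (\<forall>i. i \<notin> I \<longrightarrow> e i = 0))
           \<and> (\<forall>x. ev I p x = (\<Prod>i\<in>I. poly (g i) (x i)))"
proof -
  define E0 where "E0 = {e. (\<forall>i\<in>I. e i \<le> degree (g i)) \<and> (\<forall>i. i \<notin> I \<longrightarrow> e i = 0)}"
  define ext where "ext f = (\<lambda>i. if i \<in> I then f i else (0::nat))" for f :: "nat \<Rightarrow> nat"
  define P where "P = PiE I (\<lambda>i. {..degree (g i)})"
  have bij: "bij_betw ext P E0"
  proof (rule bij_betwI[where g="\<lambda>e. restrict e I"])
    show "ext \<in> P \<rightarrow> E0" unfolding P_def E0_def ext_def by auto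
    show "(\<lambda>e. restrict e I) \<in> E0 \<rightarrow> P" unfolding P_def E0_def by auto
    show "restrict (ext f) I = f" if "f \<in> P" for f
      using that unfolding P_def ext_def by (auto simp: PiE_def extensional_def fun_eq_iff)
    show "ext (restrict e I) = e" if "e \<in> E0" for e
      using that unfolding E0_def ext_def by (auto simp: fun_eq_iff)
  qed
  have finP: "finite P" unfolding P_def using fin by (intro finite_PiE) auto
  have finE0: "finite E0" using bij finP bij_betw_finite by blast
  define p where "p e = (if e \<in> E0 then (\<Prod>i\<in>I. coeff (g i) (e i)) else 0)" for e
  have sub: "{e. p e \<noteq> 0} \<subseteq> E0" unfolding p_def by (auto split: if_splits)
  have "fsupp p" unfolding fsupp_def using finite_subset[OF sub finE0] .
  moreover have "\<forall>e. p e \<noteq> 0 \<longrightarrow> (\<forall>i\<in>I. e i \<le> degree (g i)) \<and> (\<forall>i. i \<notin> I \<longrightarrow> e i = 0)"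
    using sub unfolding E0_def by blast
  moreover have "\<forall>x. ev I p x = (\<Prod>i\<in>I. poly (g i) (x i))"
  proof
    fix x
    have "ev I p x = (\<Sum>e\<in>E0. p e * mon I e x)" by (rule ev_superset[OF finE0 sub])
    also have "\<dots> = (\<Sum>e\<in>E0. \<Prod>i\<in>I. coeff (g i) (e i) * x i ^ e i)"
      unfolding p_def mon_def by (simp add: prod.distrib)
    also have "\<dots> = (\<Sum>f\<in>P. \<Prod>i\<in>I. coeff (g i) (ext f i) * x i ^ ext f i)"
      by (rule sum.reindex_bij_betw[OF bij, symmetric])
    also have "\<dots> = (\<Sum>f\<in>P. \<Prod>i\<in>I. coeff (g i) (f i) * x i ^ f i)"
      unfolding ext_def by (intro sum.cong refl prod.cong) auto
    also have "\<dots> = (\<Prod>i\<in>I. \<Sum>k\<in>{..degree (g i)}. coeff (g i) k * x i ^ k)"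
      unfolding P_def by (rule prod_sum_PiE[symmetric]) (use fin in auto)
    also have "\<dots> = (\<Prod>i\<in>I. poly (g i) (x i))" by (simp add: poly_altdef)
    finally show "ev I p x = (\<Prod>i\<in>I. poly (g i) (x i))" .
  qed
  ultimately show ?thesis by blast
qed

definition vpoly :: "'a::comm_ring_1 set \<Rightarrow> 'a poly" where
  "vpoly A = (\<Prod>c\<in>A. [:-c, 1:])"

lemma vpoly_deg: "finite A \<Longrightarrow> degree (vpoly (A::'a::field set)) = card A"
  unfolding vpoly_def by (subst degree_prod_eq_sum_degree) auto

lemma vpoly_eval: "finite A \<Longrightarrow> (poly (vpoly (A::'a::field set)) t = 0) \<longleftrightarrow> t \<in> A"
  unfolding vpoly_def poly_prod by (auto simp: prod_zero_iff)


lemma mpoly_eval_ev: "mpoly_eval n p x = ev {1..n} p x"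
  unfolding mpoly_eval_def ev_def mon_def ..

lemma Constr:
  fixes K :: "nat \<Rightarrow> 'a::field set"
  assumes KI: "\<forall>i\<in>{1..n}. finite (K i) \<and> K i \<noteq> {}"
    and A: "A \<subseteq> {1..n}" and i1: "i1 \<in> {1..n}" "i1 \<notin> A"
    and S: "S \<subseteq> K i1" "card S < card (K i1)"
  shows "\<exists>p. is_mpoly n p \<and> (\<forall>e. p e \<noteq> 0 \<longrightarrow> mono_deg n e \<le> (\<Sum>i\<in>A. card (K i) - 1) + card S
             \<and> (\<forall>i\<in>{1..n}. i \<notin> A \<longrightarrow> i \<noteq> i1 \<longrightarrow> e i = 0) \<and> e i1 \<le> card S)
     \<and> hweight (cart_points n K) (Psi n K p) = (card (K i1) - card S) * (\<Prod>i\<in>{1..n}-A-{i1}. card (K i))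
     \<and> (\<exists>x\<in>cart_points n K. Psi n K p x \<noteq> 0)"
proof -
  define b where "b i = (SOME c. c \<in> K i)" for i
  have b: "b i \<in> K i" if "i \<in> {1..n}" for i 
  proof -
    have "K i \<noteq> {}" using KI that by blast
    then show ?thesis unfolding b_def by (simp add: some_in_eq)
  qed
  define g where "g i = (if i \<in> A then vpoly (K i - {b i}) else if i = i1 then vpoly S else 1)" for i
  obtain p where fp: "fsupp p" and pe: "\<forall>e. p e \<noteq> 0 \<longrightarrow> (\<forall>i\<in>{1..n}. e i \<le> degree (g i)) \<and> (\<forall>i. i \<notin> {1..n} \<longrightarrow> e i = 0)"
    and pev: "\<forall>x. ev {1..n} p x = (\<Prod>i\<in>{1..n}. poly (g i) (x i))"
    using prod_poly[of "{1..n}" g] by auto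
  have finS: "finite S" using S KI i1 finite_subset by blast
  have dg: "degree (g i) = (if i \<in> A then card (K i) - 1 else if i = i1 then card S else 0)" if "i \<in> {1..n}" for i
    using that KI b finS unfolding g_def by (auto simp: vpoly_deg)
  have r1: "is_mpoly n p" using fp pe unfolding is_mpoly_def fsupp_def by blast
  have r2: "\<forall>e. p e \<noteq> 0 \<longrightarrow> mono_deg n e \<le> (\<Sum>i\<in>A. card (K i) - 1) + card S
             \<and> (\<forall>i\<in>{1..n}. i \<notin> A \<longrightarrow> i \<noteq> i1 \<longrightarrow> e i = 0) \<and> e i1 \<le> card S"
  proof (intro allI impI conjI)
    fix e assume pe0: "p e \<noteq> 0"
    then have le: "\<forall>i\<in>{1..n}. e i \<le> degree (g i)" using pe by blast
    have "mono_deg n e = (\<Sum>i\<in>{1..n}. e i)" unfolding mono_deg_def ..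
    also have "\<dots> \<le> (\<Sum>i\<in>{1..n}. degree (g i))" using le by (intro sum_mono) auto
    also have "\<dots> = (\<Sum>i\<in>insert i1 A. degree (g i))"
      using A i1 dg by (intro sum.mono_neutral_right) auto
    also have "\<dots> = degree (g i1) + (\<Sum>i\<in>A. degree (g i))"
      using A i1 by (subst sum.insert) (auto intro: finite_subset)
    also have "\<dots> = card S + (\<Sum>i\<in>A. card (K i) - 1)"
      using dg i1 A by (auto intro!: sum.cong)
    finally show "mono_deg n e \<le> (\<Sum>i\<in>A. card (K i) - 1) + card S" by simp
    show "\<forall>i\<in>{1..n}. i \<notin> A \<longrightarrow> i \<noteq> i1 \<longrightarrow> e i = 0" using le dg by fastforce
    show "e i1 \<le> card S" using le dg i1 by fastforce
  qed
  define K' where "K' i = (if i \<in> A then {b i} else if i = i1 then K i1 - S else K i)" for i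
  have nz: "{x\<in>cart_points n K. Psi n K p x \<noteq> 0} = PiE {1..n} K'"
  proof -
    have "x \<in> PiE {1..n} K' \<longleftrightarrow> x \<in> PiE {1..n} K \<and> (\<forall>i\<in>{1..n}. poly (g i) (x i) \<noteq> 0)" for x
    proof -
      have "(x i \<in> K' i) \<longleftrightarrow> (x i \<in> K i \<and> poly (g i) (x i) \<noteq> 0)" if "i \<in> {1..n}" for i
      proof -
        have fK: "finite (K i)" using KI that by blast
        show ?thesis using that b[OF that] fK finS
          unfolding K'_def g_def by (auto simp: vpoly_eval)
      qed
      then show ?thesis unfolding PiE_def Pi_def by auto
    qed
    moreover have "x \<in> {x\<in>cart_points n K. Psi n K p x \<noteq> 0} \<longleftrightarrow> x \<in> PiE {1..n} K \<and> (\<forall>i\<in>{1..n}. poly (g i) (x i) \<noteq> 0)" for x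
      unfolding cart_points_def Psi_def mpoly_eval_ev pev[rule_format] by (simp add: prod_zero_iff)
    ultimately show ?thesis by blast
  qed
  have cK': "card (K' i) \<ge> 1" if "i \<in> {1..n}" for i
  proof -
    have "finite (K i)" "K i \<noteq> {}" using KI that by auto
    then have "card (K i) \<ge> 1" by (simp add: Suc_leI card_gt_0_iff)
    then show ?thesis using that S finS unfolding K'_def by (auto simp: card_Diff_subset)
  qed
  have "hweight (cart_points n K) (Psi n K p) = card (PiE {1..n} K')"
    unfolding hweight_def nz ..
  also have "\<dots> = (\<Prod>i\<in>{1..n}. card (K' i))" by (rule card_PiE) simp
  also have "\<dots> = (\<Prod>i\<in>A. card (K' i)) * (\<Prod>i\<in>{1..n}-A. card (K' i))"
    using A by (metis finite_atLeastAtMost prod.subset_diff mult.commute)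
  also have "(\<Prod>i\<in>A. card (K' i)) = 1" unfolding K'_def by simp
  also have "(\<Prod>i\<in>{1..n}-A. card (K' i)) = card (K' i1) * (\<Prod>i\<in>{1..n}-A-{i1}. card (K' i))"
    using i1 by (subst prod.remove[of _ i1]) auto
  also have "(\<Prod>i\<in>{1..n}-A-{i1}. card (K' i)) = (\<Prod>i\<in>{1..n}-A-{i1}. card (K i))"
    unfolding K'_def by (intro prod.cong) auto
  also have "card (K' i1) = card (K i1) - card S" unfolding K'_def using i1 S finS by (simp add: card_Diff_subset)
  finally have r3: "hweight (cart_points n K) (Psi n K p) = (card (K i1) - card S) * (\<Prod>i\<in>{1..n}-A-{i1}. card (K i))"
    by simp
  have r4: "\<exists>x\<in>cart_points n K. Psi n K p x \<noteq> 0"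
  proof -
    have "PiE {1..n} K' \<noteq> {}" using cK' by (subst PiE_eq_empty_iff) (auto, fastforce)
    then show ?thesis using nz by blast
  qed
  show ?thesis using r1 r2 r3 r4 by blast
qed


interpretation VS: vector_space "\<lambda>(a::'a::field) (v::'b\<Rightarrow>'a) x. a * v x"
  by unfold_locales (auto simp: fun_eq_iff algebra_simps)

lemma sum_fun_apply: "(sum f A) y = (\<Sum>a\<in>A. f a y)"
  by (induction A rule: infinite_finite_induct) auto

lemma restr_in_span:
  fixes c :: "'b \<Rightarrow> 'a::field"
  assumes "finite P"
  shows "(\<lambda>y. if y \<in> P then c y else 0) \<in> VS.span ((\<lambda>x. (\<lambda>y. if y = x then 1 else 0)) ` P)"
proof -
  have eq: "(\<lambda>y. if y \<in> P then c y else 0) = (\<Sum>x\<in>P. (\<lambda>y. c x * (if y = x then 1 else 0)))"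
    using assms by (auto simp: fun_eq_iff sum_fun_apply if_distrib cong: if_cong)
  show ?thesis unfolding eq
    by (intro VS.span_sum VS.span_scale[where c="c _", unfolded] VS.span_base) auto
qed

lemma Lin:
  fixes V :: "('b \<Rightarrow> 'a::field) set" and P :: "'b set"
  assumes sub: "VS.subspace V" and fP: "finite P"
    and inj: "\<forall>c\<in>V. (\<forall>x\<in>P. c x = 0) \<longrightarrow> c = 0"
  shows "VS.dim V \<le> card P"
proof -
  obtain B where B: "B \<subseteq> V" "VS.independent B" "V \<subseteq> VS.span B" "card B = VS.dim V"
    by (rule VS.basis_exists)
  define R where "R c = (\<lambda>y. if y \<in> P then c y else 0)" for c :: "'b \<Rightarrow> 'a"
  define W where "W = (\<lambda>x. (\<lambda>y. if y = x then (1::'a) else 0)) ` P"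
  interpret RH: module_hom "\<lambda>(a::'a) (v::'b\<Rightarrow>'a) x. a * v x" "\<lambda>(a::'a) (v::'b\<Rightarrow>'a) x. a * v x" R
    by unfold_locales (auto simp: R_def fun_eq_iff algebra_simps)
  have spB: "VS.span B \<subseteq> V" using B(1) sub by (rule VS.span_minimal)
  have injR: "inj_on R (VS.span B)"
  proof (rule inj_onI)
    fix c c' assume c: "c \<in> VS.span B" "c' \<in> VS.span B" "R c = R c'"
    have "c - c' \<in> V" using c spB sub by (auto intro: VS.subspace_diff)
    moreover have "\<forall>x\<in>P. (c - c') x = 0"
    proof
      fix x assume "x \<in> P"
      then have "R c x = R c' x" using c(3) by simp
      then show "(c - c') x = 0" using \<open>x \<in> P\<close> unfolding R_def by simp
    qed
    ultimately have "c - c' = 0" using inj by blast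
    then show "c = c'" by simp
  qed
  have indR: "VS.independent (R ` B)" by (rule RH.independent_injective_image[OF B(2) injR])
  have "R ` B \<subseteq> VS.span W" unfolding W_def R_def using restr_in_span[OF fP] by auto
  then have "card (R ` B) \<le> card W" using VS.independent_span_bound[OF _ indR] fP unfolding W_def by auto
  also have "card W \<le> card P" unfolding W_def by (rule card_image_le[OF fP])
  finally have "card (R ` B) \<le> card P" .
  moreover have "card (R ` B) = card B" by (rule card_image) (use injR VS.span_superset in \<open>auto intro: inj_on_subset\<close>)
  ultimately show ?thesis using B(4) by simp
qed


lemma ev_add:
  assumes "fsupp p" "fsupp q"
  shows "ev I (\<lambda>e. p e + q e) x = ev I p x + ev I q x"
proof -
  define S where "S = {e. p e \<noteq> 0} \<union> {e. q e \<noteq> 0}"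
  have fS: "finite S" using assms unfolding S_def fsupp_def by auto
  have "ev I (\<lambda>e. p e + q e) x = (\<Sum>e\<in>S. (p e + q e) * mon I e x)"
    by (rule ev_superset[OF fS]) (auto simp: S_def)
  also have "\<dots> = (\<Sum>e\<in>S. p e * mon I e x) + (\<Sum>e\<in>S. q e * mon I e x)"
    by (simp add: algebra_simps sum.distrib)
  also have "\<dots> = ev I p x + ev I q x"
    using ev_superset[OF fS, of p] ev_superset[OF fS, of q] by (auto simp: S_def)
  finally show ?thesis .
qed

lemma ev_scale:
  assumes "fsupp p"
  shows "ev I (\<lambda>e. a * p e) x = a * ev I p x"
proof -
  define S where "S = {e. p e \<noteq> 0}"
  have fS: "finite S" using assms unfolding S_def fsupp_def by auto
  have "ev I (\<lambda>e. a * p e) x = (\<Sum>e\<in>S. (a * p e) * mon I e x)"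
    by (rule ev_superset[OF fS]) (auto simp: S_def)
  also have "\<dots> = a * ev I p x" unfolding ev_def S_def by (simp add: sum_distrib_left mult.assoc)
  finally show ?thesis .
qed

lemma quasi_fsupp: "p \<in> quasi_polys n K \<delta> s d \<Longrightarrow> fsupp p"
  unfolding quasi_polys_def polys_le_def is_mpoly_def fsupp_def by auto

lemma D_subspace: "VS.subspace (quasi_cart_code n (K::nat \<Rightarrow> 'a::field set) \<delta> s d)"
proof (rule VS.subspaceI)
  let ?Q = "quasi_polys n K \<delta> s d"
  have z: "(\<lambda>e. 0::'a) \<in> ?Q" unfolding quasi_polys_def polys_le_def is_mpoly_def by auto
  have "Psi n K (\<lambda>e. 0::'a) = 0" unfolding Psi_def mpoly_eval_def by (auto simp: fun_eq_iff)
  then show "0 \<in> quasi_cart_code n K \<delta> s d" unfolding quasi_cart_code_def using z by (metis image_eqI)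
next
  fix c c' assume "c \<in> quasi_cart_code n K \<delta> s d" "c' \<in> quasi_cart_code n K \<delta> s d"
  then obtain p q where pq: "p \<in> quasi_polys n K \<delta> s d" "q \<in> quasi_polys n K \<delta> s d" "c = Psi n K p" "c' = Psi n K q"
    unfolding quasi_cart_code_def by auto
  have mem: "(\<lambda>e. p e + q e) \<in> quasi_polys n K \<delta> s d"
  proof -
    have sub: "{e. p e + q e \<noteq> 0} \<subseteq> {e. p e \<noteq> 0} \<union> {e. q e \<noteq> 0}" by auto
    have "finite {e. p e + q e \<noteq> 0}" using quasi_fsupp[OF pq(1)] quasi_fsupp[OF pq(2)] unfolding fsupp_def
      by (intro finite_subset[OF sub]) auto
    have or: "\<forall>e. p e + q e \<noteq> 0 \<longrightarrow> p e \<noteq> 0 \<or> q e \<noteq> 0" by auto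
    have P: "\<And>Q. (\<forall>e. p e \<noteq> 0 \<longrightarrow> Q e) \<Longrightarrow> (\<forall>e. q e \<noteq> 0 \<longrightarrow> Q e) \<Longrightarrow> (\<forall>e. p e + q e \<noteq> 0 \<longrightarrow> Q e)"
      using or by blast
    have a1: "\<forall>e. p e + q e \<noteq> 0 \<longrightarrow> (\<forall>i. i \<notin> {1..n} \<longrightarrow> e i = 0)"
      by (rule P) (use pq(1,2) in \<open>unfold quasi_polys_def polys_le_def is_mpoly_def, blast+\<close>)
    have a2: "\<forall>e. p e + q e \<noteq> 0 \<longrightarrow> mono_deg n e \<le> d"
      by (rule P) (use pq(1,2) in \<open>unfold quasi_polys_def polys_le_def is_mpoly_def, blast+\<close>)
    have a3: "\<forall>e. p e + q e \<noteq> 0 \<longrightarrow> int (e s) < int (card (K s)) - int \<delta> + 1"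
      by (rule P) (use pq(1,2) in \<open>unfold quasi_polys_def polys_le_def is_mpoly_def, blast+\<close>)
    show ?thesis unfolding quasi_polys_def polys_le_def is_mpoly_def
      using a1 a2 a3 \<open>finite {e. p e + q e \<noteq> 0}\<close> by blast
  qed
  have "Psi n K (\<lambda>e. p e + q e) = c + c'"
    unfolding pq Psi_def mpoly_eval_ev using ev_add[OF quasi_fsupp[OF pq(1)] quasi_fsupp[OF pq(2)]]
    by (auto simp: fun_eq_iff)
  then show "c + c' \<in> quasi_cart_code n K \<delta> s d" unfolding quasi_cart_code_def using mem by (metis image_eqI)
next
  fix a :: 'a and c assume "c \<in> quasi_cart_code n K \<delta> s d"
  then obtain p where p: "p \<in> quasi_polys n K \<delta> s d" "c = Psi n K p"
    unfolding quasi_cart_code_def by auto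
  have mem: "(\<lambda>e. a * p e) \<in> quasi_polys n K \<delta> s d"
  proof -
    have sub: "{e. a * p e \<noteq> 0} \<subseteq> {e. p e \<noteq> 0}" by auto
    have "finite {e. a * p e \<noteq> 0}" using quasi_fsupp[OF p(1)] unfolding fsupp_def
      by (rule finite_subset[OF sub])
    then show ?thesis using p(1) unfolding quasi_polys_def polys_le_def is_mpoly_def by auto
  qed
  have "Psi n K (\<lambda>e. a * p e) = (\<lambda>x. a * c x)"
    unfolding p Psi_def mpoly_eval_ev using ev_scale[OF quasi_fsupp[OF p(1)]]
    by (auto simp: fun_eq_iff)
  then show "(\<lambda>x. a * c x) \<in> quasi_cart_code n K \<delta> s d" unfolding quasi_cart_code_def using mem by (metis image_eqI)
qed

lemma card_split:
  assumes i: "i \<in> I" and T: "T \<subseteq> PiE (I-{i}) K" and R: "R \<subseteq> K i"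
  shows "card {x\<in>PiE I K. x(i:=undefined) \<in> T \<and> x i \<in> R} = card T * card R"
proof -
  let ?f = "\<lambda>(y,t). y(i:=t)"
  have bij: "bij_betw ?f (PiE (I-{i}) K \<times> K i) (PiE I K)" by (rule pie_split[OF i])
  have sub: "T \<times> R \<subseteq> PiE (I-{i}) K \<times> K i" using T R by auto
  have eq: "{x\<in>PiE I K. x(i:=undefined) \<in> T \<and> x i \<in> R} = ?f ` (T \<times> R)"
  proof
    show "{x\<in>PiE I K. x(i:=undefined) \<in> T \<and> x i \<in> R} \<subseteq> ?f ` (T \<times> R)"
    proof
      fix x assume x: "x \<in> {x\<in>PiE I K. x(i:=undefined) \<in> T \<and> x i \<in> R}"
      have e: "x = ?f (x(i:=undefined), x i)" by simp
      have "(x(i:=undefined), x i) \<in> T \<times> R" using x by simp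
      then show "x \<in> ?f ` (T \<times> R)" by (rule rev_image_eqI) (rule e)
    qed
    show "?f ` (T \<times> R) \<subseteq> {x\<in>PiE I K. x(i:=undefined) \<in> T \<and> x i \<in> R}"
    proof
      fix x assume "x \<in> ?f ` (T \<times> R)"
      then obtain y t where yt: "y \<in> T" "t \<in> R" "x = y(i:=t)" by auto
      have yi: "y i = undefined" using yt(1) T by (auto simp: PiE_def extensional_def)
      have "(y,t) \<in> PiE (I-{i}) K \<times> K i" using sub yt by blast
      then have "?f (y,t) \<in> ?f ` (PiE (I-{i}) K \<times> K i)" by (rule imageI)
      then have "x \<in> PiE I K" using bij_betw_imp_surj_on[OF bij] yt(3) by simp
      moreover have "x(i:=undefined) = y" using yt(3) yi by (auto simp: fun_eq_iff)
      ultimately show "x \<in> {x\<in>PiE I K. x(i:=undefined) \<in> T \<and> x i \<in> R}" using yt by simp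
    qed
  qed
  have "inj_on ?f (T \<times> R)" using bij_betw_imp_inj_on[OF bij] sub by (rule inj_on_subset)
  then have "card (?f ` (T \<times> R)) = card (T \<times> R)" by (rule card_image)
  then show ?thesis unfolding eq card_cartesian_product .
qed

lemma line_zero:
  fixes q :: "(nat\<Rightarrow>nat)\<Rightarrow>'a::field"
  assumes q: "q \<in> quasi_polys n K \<delta> s d" and s: "s \<in> {1..n}" and R: "finite R"
    and N: "int (card R) = int (card (K s)) - int \<delta> + 1"
    and z: "\<forall>t\<in>R. mpoly_eval n q (y(s:=t)) = 0"
  shows "mpoly_eval n q (y(s:=t)) = 0"
proof -
  define N where "N = card R"
  have bd: "\<forall>e. q e \<noteq> 0 \<longrightarrow> e s < N" using q N unfolding quasi_polys_def N_def by auto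
  define c where "c j = ev ({1..n}-{s}) (slice q s j) y" for j
  have evs: "mpoly_eval n q (y(s:=t)) = (\<Sum>j<N. c j * t ^ j)" for t
    unfolding mpoly_eval_ev c_def by (rule ev_slice[OF _ s quasi_fsupp[OF q] bd]) simp
  have "\<forall>j<N. c j = 0"
  proof (rule ccontr)
    assume "\<not> (\<forall>j<N. c j = 0)"
    then have ne: "{j. j < N \<and> c j \<noteq> 0} \<noteq> {}" by auto
    define j0 where "j0 = Max {j. j < N \<and> c j \<noteq> 0}"
    have j0: "j0 < N" "c j0 \<noteq> 0" using Max_in[OF _ ne] unfolding j0_def by auto
    have hi: "\<forall>k. j0 < k \<longrightarrow> k < N \<longrightarrow> c k = 0"
    proof (intro allI impI)
      fix k assume "j0 < k" "k < N"
      show "c k = 0"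
      proof (rule ccontr)
        assume "c k \<noteq> 0"
        then have "k \<le> j0" unfolding j0_def using \<open>k < N\<close> by (intro Max_ge) auto
        then show False using \<open>j0 < k\<close> by simp
      qed
    qed
    have "card R - j0 \<le> card {t\<in>R. (\<Sum>k<N. c k * t ^ k) \<noteq> 0}"
      by (rule Ucount[OF R j0(2) hi j0(1)])
    also have "{t\<in>R. (\<Sum>k<N. c k * t ^ k) \<noteq> 0} = {}" using z evs by auto
    finally show False using j0(1) unfolding N_def by simp
  qed
  then show ?thesis unfolding evs by simp
qed


lemma ceil_facts:
  fixes \<kappa> r :: nat
  assumes "\<kappa> \<ge> 1" "r \<ge> 1"
  shows "int (nat (\<lceil>real \<kappa> / real r\<rceil> - 1)) = \<lceil>real \<kappa> / real r\<rceil> - 1"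
    and "nat (\<lceil>real \<kappa> / real r\<rceil> - 1) * r < \<kappa>"
proof -
  define x where "x = real \<kappa> / real r"
  have x0: "x > 0" using assms unfolding x_def by simp
  then have c1: "\<lceil>x\<rceil> \<ge> 1" by (simp add: not_less[symmetric])
  then show "int (nat (\<lceil>real \<kappa> / real r\<rceil> - 1)) = \<lceil>real \<kappa> / real r\<rceil> - 1" unfolding x_def by simp
  have "of_int \<lceil>x\<rceil> - 1 < x" using ceiling_correct by blast
  then have "real (nat (\<lceil>x\<rceil> - 1)) < x" using c1 by simp
  then have "real (nat (\<lceil>x\<rceil> - 1)) * real r < real \<kappa>" using assms unfolding x_def by (simp add: pos_less_divide_eq)
  then have "real (nat (\<lceil>x\<rceil> - 1) * r) < real \<kappa>" by simp
  then show "nat (\<lceil>real \<kappa> / real r\<rceil> - 1) * r < \<kappa>" unfolding x_def of_nat_less_iff .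
qed

lemma min_dist_le:
  assumes "finite X" "c \<in> C" "\<exists>x\<in>X. c x \<noteq> 0"
  shows "min_dist X C \<le> hweight X c"
proof -
  have "{hweight X c | c. c \<in> C \<and> (\<exists>x\<in>X. c x \<noteq> 0)} \<subseteq> {..card X}"
    unfolding hweight_def using assms(1) by (auto intro: card_mono)
  then have "finite {hweight X c | c. c \<in> C \<and> (\<exists>x\<in>X. c x \<noteq> 0)}" by (rule finite_subset) simp
  then show ?thesis unfolding min_dist_def using assms(2,3) by (intro Min_le) auto
qed

lemma singleton_bound:
  fixes K :: "nat \<Rightarrow> 'a::field set"
  assumes KI: "\<forall>i\<in>{1..n}. finite (K i) \<and> K i \<noteq> {}" and s: "s \<in> {1..n}" and \<delta>: "\<delta> \<ge> 1"
    and rr: "int (card (K s)) - int \<delta> + 1 \<ge> 1"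
  shows "int (min_dist (cart_points n K) (quasi_cart_code n K \<delta> s d)) \<le>
      int (\<Prod>i\<in>{1..n}. card (K i)) - int (code_dim (quasi_cart_code n K \<delta> s d))
      - (\<lceil>real (code_dim (quasi_cart_code n K \<delta> s d)) / real_of_int (int (card (K s)) - int \<delta> + 1)\<rceil> - 1) * (int \<delta> - 1) + 1"
proof -
  define X where "X = cart_points n K"
  define D where "D = quasi_cart_code n K \<delta> s d"
  define \<kappa> where "\<kappa> = code_dim D"
  define ds where "ds = card (K s)"
  define r where "r = ds + 1 - \<delta>"
  have r1: "r \<ge> 1" and rint: "int r = int (card (K s)) - int \<delta> + 1" and rds: "r \<le> ds" and dsr: "ds = r + (\<delta> - 1)"
    using rr \<delta> unfolding r_def ds_def by auto
  define J where "J = {1..n} - {s}"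
  define Y where "Y = PiE J K"
  define L where "L = card Y"
  have XP: "X = PiE {1..n} K" unfolding X_def cart_points_def ..
  have finX: "finite X" unfolding XP using KI by (intro finite_PiE) auto
  have finKs: "finite (K s)" using KI s by auto
  have finY: "finite Y" unfolding Y_def J_def using KI by (intro finite_PiE) auto
  have resY: "x(s:=undefined) \<in> Y" if "x \<in> X" for x
    using that unfolding XP Y_def J_def by (auto simp: PiE_def extensional_def)
  have updX: "y(s:=t) \<in> X" if "y \<in> Y" "t \<in> K s" for y t
    using that s unfolding XP Y_def J_def by (auto simp: PiE_def extensional_def)
  have updres: "(y(s:=t))(s:=undefined) = y" if "y \<in> Y" for y t
    using that unfolding Y_def J_def by (auto simp: PiE_def extensional_def fun_eq_iff)
  have cardsplit: "card {x\<in>X. x(s:=undefined) \<in> T \<and> x s \<in> R} = card T * card R"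
    if "T \<subseteq> Y" "R \<subseteq> K s" for T R
    unfolding XP using card_split[OF s, of T K R] that unfolding Y_def J_def by simp
  have cX: "card X = L * ds"
  proof -
    have "X = {x\<in>X. x(s:=undefined) \<in> Y \<and> x s \<in> K s}" using resY s unfolding XP by auto
    then show ?thesis using cardsplit[of Y "K s"] unfolding L_def ds_def by simp
  qed
  have mX: "(\<Prod>i\<in>{1..n}. card (K i)) = card X" unfolding XP by (simp add: card_PiE)
  obtain Rs where Rs: "Rs \<subseteq> K s" "card Rs = r" using obtain_subset_with_card_n[of r "K s"] rds unfolding ds_def by auto
  have finRs: "finite Rs" using Rs finKs finite_subset by blast
  have Dsub: "VS.subspace D" unfolding D_def by (rule D_subspace)
  have zero_out: "c x = 0" if "c \<in> D" "x \<notin> X" for c x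
    using that unfolding D_def quasi_cart_code_def Psi_def X_def by auto
  have vanish: "c (y(s:=t)) = 0" if cD: "c \<in> D" and yY: "y \<in> Y" and zz: "\<forall>t\<in>Rs. c (y(s:=t)) = 0" for c y t
  proof -
    obtain q where q: "q \<in> quasi_polys n K \<delta> s d" "c = Psi n K q" using cD unfolding D_def quasi_cart_code_def by auto
    have "\<forall>t\<in>Rs. mpoly_eval n q (y(s:=t)) = 0"
    proof
      fix t assume "t \<in> Rs"
      then have "y(s:=t) \<in> X" using updX[OF yY] Rs by auto
      then show "mpoly_eval n q (y(s:=t)) = 0" using zz \<open>t \<in> Rs\<close> unfolding q Psi_def X_def by auto
    qed
    then have "mpoly_eval n q (y(s:=t)) = 0" using line_zero[OF q(1) s finRs] Rs rint by simp
    then show ?thesis unfolding q Psi_def by simp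
  qed
  have vanishX: "c x = 0" if "c \<in> D" "x \<in> X" "\<forall>t\<in>Rs. c ((x(s:=undefined))(s:=t)) = 0" for c x
  proof -
    have "c ((x(s:=undefined))(s:=x s)) = 0" using vanish[OF that(1) resY[OF that(2)] that(3)] .
    then show ?thesis by simp
  qed
  have kL: "\<kappa> \<le> L * r"
  proof -
    define P0 where "P0 = {x\<in>X. x(s:=undefined) \<in> Y \<and> x s \<in> Rs}"
    have cP0: "card P0 = L * r" unfolding P0_def L_def using cardsplit[OF _ Rs(1), of Y] Rs(2) by simp
    have "\<kappa> \<le> card P0" unfolding \<kappa>_def code_dim_def
    proof (rule Lin[OF Dsub])
      show "finite P0" unfolding P0_def using finX by simp
      show "\<forall>c\<in>D. (\<forall>x\<in>P0. c x = 0) \<longrightarrow> c = 0"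
      proof (intro ballI impI)
        fix c assume c: "c \<in> D" "\<forall>x\<in>P0. c x = 0"
        show "c = 0"
        proof
          fix x show "c x = 0 x"
          proof (cases "x \<in> X")
            case True
            have "\<forall>t\<in>Rs. c ((x(s:=undefined))(s:=t)) = 0"
            proof
              fix t assume t: "t \<in> Rs"
              have "(x(s:=undefined))(s:=t) \<in> P0" unfolding P0_def
                using updX[OF resY[OF True], of t] t Rs(1) updres[OF resY[OF True]] resY[OF True] by auto
              then show "c ((x(s:=undefined))(s:=t)) = 0" using c(2) by blast
            qed
            then show ?thesis using vanishX[OF c(1) True] by simp
          qed (use zero_out[OF c(1)] in simp)
        qed
      qed
    qed
    then show ?thesis using cP0 by simp
  qed
  define one :: "(nat\<Rightarrow>nat)\<Rightarrow>'a" where "one = (\<lambda>e. if e = (\<lambda>_. 0) then 1 else 0)"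
  have one_q: "one \<in> quasi_polys n K \<delta> s d"
    using rr unfolding one_def quasi_polys_def polys_le_def is_mpoly_def mono_deg_def by auto
  have Xne: "X \<noteq> {}" unfolding XP using KI by (simp add: PiE_eq_empty_iff)
  then obtain x0 where x0: "x0 \<in> X" by blast
  have one_ev: "Psi n K one x0 = 1"
  proof -
    have "{e. one e \<noteq> 0} = {\<lambda>_. 0}" unfolding one_def by auto
    then show ?thesis using x0 unfolding Psi_def X_def mpoly_eval_def by (simp add: one_def)
  qed
  have oneD: "Psi n K one \<in> D" unfolding D_def quasi_cart_code_def using one_q by blast
  have k1: "\<kappa> \<ge> 1"
  proof (rule ccontr)
    assume "\<not> \<kappa> \<ge> 1"
    then have k0: "\<kappa> = 0" by simp
    obtain B where B: "B \<subseteq> D" "VS.independent B" "D \<subseteq> VS.span B" "card B = VS.dim D"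
      by (rule VS.basis_exists)
    define W where "W = (\<lambda>x. (\<lambda>y. if y = x then (1::'a) else 0)) ` X"
    have "B \<subseteq> VS.span W"
    proof
      fix c assume "c \<in> B"
      then have cD: "c \<in> D" using B(1) by blast
      have "c = (\<lambda>y. if y \<in> X then c y else 0)" using zero_out[OF cD] by (auto simp: fun_eq_iff)
      then show "c \<in> VS.span W" unfolding W_def using restr_in_span[OF finX, of c] by simp
    qed
    then have "finite B" using VS.independent_span_bound[OF _ B(2)] finX unfolding W_def by auto
    moreover have "card B = 0" using B(4) k0 unfolding \<kappa>_def code_dim_def by simp
    ultimately have "B = {}" by simp
    then have "D \<subseteq> {0}" using B(3) by simp
    then show False using oneD one_ev by (auto simp: fun_eq_iff)
  qed
  define t where "t = nat (\<lceil>real \<kappa> / real r\<rceil> - 1)"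
  have tint: "int t = \<lceil>real \<kappa> / real r\<rceil> - 1" and tr: "t * r < \<kappa>"
    using ceil_facts[OF k1 r1] unfolding t_def by auto
  have tL: "t < L"
  proof -
    have "t * r < L * r" by (rule less_le_trans[OF tr kL])
    then show ?thesis using mult_less_cancel2 by blast
  qed
  obtain T where T: "T \<subseteq> Y" "card T = t" using obtain_subset_with_card_n[of t Y] tL unfolding L_def by auto
  define Lines where "Lines = {x\<in>X. x(s:=undefined) \<in> T \<and> x s \<in> K s}"
  define Rest where "Rest = X - Lines"
  have cLines: "card Lines = t * ds" unfolding Lines_def ds_def using cardsplit[OF T(1), of "K s"] T(2) by simp
  have LinesX: "Lines \<subseteq> X" unfolding Lines_def by auto
  have cRest: "card Rest = L * ds - t * ds" unfolding Rest_def using finX LinesX cLines cX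
    by (simp add: card_Diff_subset finite_subset)
  have kb: "\<kappa> - 1 - t * r \<le> card Rest"
  proof -
    have "\<kappa> - 1 - t * r < L * r - t * r" using kL tr k1 by linarith
    also have "L * r - t * r \<le> L * ds - t * ds"
    proof -
      have "L * r - t * r = (L - t) * r" by (simp add: diff_mult_distrib)
      also have "\<dots> \<le> (L - t) * ds" using rds by simp
      also have "\<dots> = L * ds - t * ds" by (simp add: diff_mult_distrib)
      finally show ?thesis .
    qed
    finally show ?thesis using cRest by simp
  qed
  obtain E where E: "E \<subseteq> Rest" "card E = \<kappa> - 1 - t * r" using obtain_subset_with_card_n[OF kb] by auto
  define P1 where "P1 = {x\<in>X. x(s:=undefined) \<in> T \<and> x s \<in> Rs}"
  have cP1: "card P1 = t * r" unfolding P1_def using cardsplit[OF T(1) Rs(1)] T(2) Rs(2) by simp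
  have P1Lines: "P1 \<subseteq> Lines" unfolding P1_def Lines_def using Rs(1) by auto
  have finE: "finite E" using E(1) finX unfolding Rest_def by (auto intro: finite_subset)
  have finP1: "finite P1" unfolding P1_def using finX by simp
  have disj: "P1 \<inter> E = {}" using P1Lines E(1) unfolding Rest_def by auto
  define P where "P = P1 \<union> E"
  have cP: "card P = \<kappa> - 1" unfolding P_def using card_Un_disjoint[OF finP1 finE disj] cP1 E(2) tr by simp
  have "\<exists>c\<in>D. (\<forall>x\<in>P. c x = 0) \<and> c \<noteq> 0"
  proof (rule ccontr)
    assume "\<not> ?thesis"
    then have "\<forall>c\<in>D. (\<forall>x\<in>P. c x = 0) \<longrightarrow> c = 0" by blast
    then have "\<kappa> \<le> card P" unfolding \<kappa>_def code_dim_def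
      by (intro Lin[OF Dsub]) (use finP1 finE in \<open>auto simp: P_def\<close>)
    then show False using cP k1 by simp
  qed
  then obtain c where c: "c \<in> D" "\<forall>x\<in>P. c x = 0" "c \<noteq> 0" by blast
  have cLz: "c x = 0" if "x \<in> Lines" for x
  proof -
    have xX: "x \<in> X" and xT: "x(s:=undefined) \<in> T" using that unfolding Lines_def by auto
    have "\<forall>t\<in>Rs. c ((x(s:=undefined))(s:=t)) = 0"
    proof
      fix t' assume t': "t' \<in> Rs"
      have "(x(s:=undefined))(s:=t') \<in> P1" unfolding P1_def
        using updX[OF resY[OF xX], of t'] t' Rs(1) updres[OF resY[OF xX]] xT by auto
      then show "c ((x(s:=undefined))(s:=t')) = 0" using c(2) unfolding P_def by blast
    qed
    then show ?thesis using vanishX[OF c(1) xX] by simp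
  qed
  have cnz: "\<exists>x\<in>X. c x \<noteq> 0"
  proof (rule ccontr)
    assume "\<not> ?thesis"
    then have "c = 0" using zero_out[OF c(1)] by (auto simp: fun_eq_iff)
    then show False using c(3) by simp
  qed
  have "{x\<in>X. c x \<noteq> 0} \<subseteq> Rest - E" unfolding Rest_def using cLz c(2) unfolding P_def by auto
  then have "hweight X c \<le> card (Rest - E)" unfolding hweight_def
    by (intro card_mono) (use finX in \<open>auto simp: Rest_def\<close>)
  also have "card (Rest - E) = card Rest - card E" using E(1) finE by (simp add: card_Diff_subset)
  finally have hw: "hweight X c \<le> L * ds - t * ds - (\<kappa> - 1 - t * r)" using cRest E(2) by simp
  have md: "min_dist X D \<le> hweight X c" by (rule min_dist_le[OF finX c(1) cnz])
  have tds: "t * ds \<le> L * ds" using tL by simp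
  have kb2: "\<kappa> - 1 - t * r \<le> L * ds - t * ds" using kb cRest by simp
  have "int (L * ds - t * ds - (\<kappa> - 1 - t * r)) = int (L * ds - t * ds) - int (\<kappa> - 1 - t * r)"
    using kb2 by (rule of_nat_diff)
  also have "int (L * ds - t * ds) = int (L * ds) - int (t * ds)" using tds by (rule of_nat_diff)
  also have "int (\<kappa> - 1 - t * r) = int \<kappa> - 1 - int (t * r)" using tr by linarith
  finally have "int (min_dist X D) \<le> int (L * ds) - int (t * ds) - (int \<kappa> - 1 - int (t * r))"
    using md hw by linarith
  also have "\<dots> = int (L * ds) - int \<kappa> - int t * (int ds - int r) + 1" by (simp add: algebra_simps)
  also have "int ds - int r = int \<delta> - 1" using dsr \<delta> by simp
  finally have "int (min_dist X D) \<le> int (card X) - int \<kappa> - int t * (int \<delta> - 1) + 1" using cX by simp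
  then have fin: "int (min_dist X D) \<le> int (card X) - int \<kappa> - (\<lceil>real \<kappa> / real r\<rceil> - 1) * (int \<delta> - 1) + 1"
    unfolding tint .
  have eqr: "real_of_int (int (card (K s)) - int \<delta> + 1) = real r" using rint by (metis of_int_of_nat_eq)
  show ?thesis unfolding eqr mX using fin unfolding X_def D_def \<kappa>_def .
qed


lemma G_B:
  fixes f :: "nat \<Rightarrow> nat"
  assumes "\<forall>i\<in>{1..n}. f i \<ge> 1" "k < n" "0 < l" "l \<le> f (k+1) - 1"
  shows "G (map f (sorted_list_of_set {1..n})) ((\<Sum>i\<in>{1..k}. (f i - 1)) + l) = (f (k+1) - l) * (\<Prod>i\<in>{k+2..n}. f i)"
proof -
  have sl: "sorted_list_of_set {1..n} = [1..<Suc n]"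
    using sorted_list_of_set_range[of 1 "Suc n"] by (simp add: atLeastLessThanSuc_atLeastAtMost)
  define L where "L = map f [1..<Suc n]"
  have len: "length L = n" unfolding L_def by simp
  have Lk: "L ! k = f (k+1)" unfolding L_def using assms(2) by (simp add: nth_map_upt del: upt_Suc)
  have tk: "take k L = map f [1..<Suc k]" unfolding L_def using assms(2) by (simp add: take_map take_upt)
  have s1: "sum_list (map (\<lambda>x. x - 1) (take k L)) = (\<Sum>i\<in>{1..k}. (f i - 1))"
  proof -
    have h: "sum (\<lambda>i. f i - 1) (set [1..<Suc k]) = sum_list (map (\<lambda>i. f i - 1) [1..<Suc k])"
      by (rule sum.distinct_set_conv_list) simp
    have st: "set [1..<Suc k] = {1..k}" by (simp only: set_upt atLeastLessThanSuc_atLeastAtMost)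
    show ?thesis unfolding tk map_map comp_def h[symmetric] st ..
  qed
  have dk: "drop (Suc k) L = map f [k+2..<Suc n]" unfolding L_def by (simp add: drop_map)
  have p1: "prod_list (drop (Suc k) L) = (\<Prod>i\<in>{k+2..n}. f i)"
  proof -
    have h: "prod f (set [k+2..<Suc n]) = prod_list (map f [k+2..<Suc n])"
      by (rule prod.distinct_set_conv_list) simp
    have st: "set [k+2..<Suc n] = {k+2..n}" by (simp only: set_upt atLeastLessThanSuc_atLeastAtMost)
    show ?thesis unfolding dk h[symmetric] st ..
  qed
  have "G L (sum_list (map (\<lambda>x. x - 1) (take k L)) + l) = (L!k - l) * prod_list (drop (Suc k) L)"
  proof (rule G_formula)
    show "\<forall>b\<in>set L. b \<ge> 1" using assms(1) unfolding L_def by auto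
    show "k < length L" using len assms(2) by simp
    show "0 < l" by fact
    show "l \<le> L ! k - 1" unfolding Lk using assms(4) by simp
  qed
  then show ?thesis unfolding sl s1 p1 Lk L_def[symmetric] .
qed

lemma lowerC:
  fixes K :: "nat \<Rightarrow> 'a::field set"
  assumes KI: "\<forall>i\<in>{1..n}. finite (K i) \<and> card (K i) \<ge> 1"
    and mono: "\<forall>i j. 1 \<le> i \<and> i \<le> j \<and> j \<le> n \<longrightarrow> card (K i) \<le> card (K j)"
    and c: "c \<in> affine_cart_code n K d" "\<exists>x\<in>cart_points n K. c x \<noteq> 0"
  shows "G (map (\<lambda>i. card (K i)) (sorted_list_of_set {1..n})) d \<le> hweight (cart_points n K) c"
proof -
  obtain p where p: "p \<in> polys_le n d" "c = Psi n K p" using c(1) unfolding affine_cart_code_def by auto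
  have fp: "fsupp p" using p(1) unfolding polys_le_def is_mpoly_def fsupp_def by auto
  have dp: "degle {1..n} p d" using p(1) unfolding polys_le_def degle_def mono_deg_def by auto
  have KI': "\<forall>i\<in>{1..n}. finite (K i) \<and> K i \<noteq> {}" using KI by auto
  obtain q where q: "fsupp q" "degle {1..n} q d" "reduced {1..n} K q" "\<forall>x\<in>PiE {1..n} K. ev {1..n} q x = ev {1..n} p x"
    using reduce_poly[OF _ KI' fp dp] by auto
  have eqset: "{x\<in>cart_points n K. c x \<noteq> 0} = {x\<in>PiE {1..n} K. ev {1..n} q x \<noteq> 0}"
    unfolding p(2) Psi_def cart_points_def mpoly_eval_ev using q(4) by auto
  have ne: "\<exists>x\<in>PiE {1..n} K. ev {1..n} q x \<noteq> 0" using c(2) eqset by blast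
  have "G (map (\<lambda>i. card (K i)) (sorted_list_of_set {1..n})) d \<le> card {x\<in>PiE {1..n} K. ev {1..n} q x \<noteq> 0}"
    by (rule AF) (use KI mono q ne in auto)
  then show ?thesis unfolding hweight_def eqset .
qed


lemma mkcwC:
  fixes K :: "nat \<Rightarrow> 'a::field set"
  assumes KI: "\<forall>i\<in>{1..n}. finite (K i) \<and> K i \<noteq> {}"
    and A: "A \<subseteq> {1..n}" and i1: "i1 \<in> {1..n}" "i1 \<notin> A"
    and S: "S \<subseteq> K i1" "card S < card (K i1)"
    and deg: "(\<Sum>i\<in>A. card (K i) - 1) + card S \<le> d"
  shows "\<exists>c\<in>affine_cart_code n K d. hweight (cart_points n K) c = (card (K i1) - card S) * (\<Prod>i\<in>{1..n}-A-{i1}. card (K i))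
           \<and> (\<exists>x\<in>cart_points n K. c x \<noteq> 0)"
proof -
  obtain p where p: "is_mpoly n p" "\<forall>e. p e \<noteq> 0 \<longrightarrow> mono_deg n e \<le> (\<Sum>i\<in>A. card (K i) - 1) + card S
             \<and> (\<forall>i\<in>{1..n}. i \<notin> A \<longrightarrow> i \<noteq> i1 \<longrightarrow> e i = 0) \<and> e i1 \<le> card S"
     "hweight (cart_points n K) (Psi n K p) = (card (K i1) - card S) * (\<Prod>i\<in>{1..n}-A-{i1}. card (K i))"
     "\<exists>x\<in>cart_points n K. Psi n K p x \<noteq> 0"
    using Constr[OF KI A i1 S] by blast
  have "p \<in> polys_le n d" unfolding polys_le_def using p(1,2) deg by fastforce
  then show ?thesis using p(3,4) unfolding affine_cart_code_def by blast
qed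

lemma mkcwD:
  fixes K :: "nat \<Rightarrow> 'a::field set"
  assumes KI: "\<forall>i\<in>{1..n}. finite (K i) \<and> K i \<noteq> {}"
    and A: "A \<subseteq> {1..n}" and i1: "i1 \<in> {1..n}" "i1 \<notin> A"
    and S: "S \<subseteq> K i1" "card S < card (K i1)"
    and deg: "(\<Sum>i\<in>A. card (K i) - 1) + card S \<le> d"
    and s: "s \<in> {1..n}" "s \<notin> A" and si: "s = i1 \<longrightarrow> int (card S) < int (card (K s)) - int \<delta> + 1"
    and rr: "int (card (K s)) - int \<delta> + 1 \<ge> 1"
  shows "\<exists>c\<in>quasi_cart_code n K \<delta> s d. hweight (cart_points n K) c = (card (K i1) - card S) * (\<Prod>i\<in>{1..n}-A-{i1}. card (K i))
           \<and> (\<exists>x\<in>cart_points n K. c x \<noteq> 0)"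
proof -
  obtain p where p: "is_mpoly n p" "\<forall>e. p e \<noteq> 0 \<longrightarrow> mono_deg n e \<le> (\<Sum>i\<in>A. card (K i) - 1) + card S
             \<and> (\<forall>i\<in>{1..n}. i \<notin> A \<longrightarrow> i \<noteq> i1 \<longrightarrow> e i = 0) \<and> e i1 \<le> card S"
     "hweight (cart_points n K) (Psi n K p) = (card (K i1) - card S) * (\<Prod>i\<in>{1..n}-A-{i1}. card (K i))"
     "\<exists>x\<in>cart_points n K. Psi n K p x \<noteq> 0"
    using Constr[OF KI A i1 S] by blast
  have "p \<in> polys_le n d" unfolding polys_le_def using p(1,2) deg by fastforce
  moreover have "\<forall>e. p e \<noteq> 0 \<longrightarrow> int (e s) < int (card (K s)) - int \<delta> + 1"
  proof (intro allI impI)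
    fix e assume "p e \<noteq> 0"
    then have h: "(\<forall>i\<in>{1..n}. i \<notin> A \<longrightarrow> i \<noteq> i1 \<longrightarrow> e i = 0) \<and> e i1 \<le> card S" using p(2) by blast
    show "int (e s) < int (card (K s)) - int \<delta> + 1"
    proof (cases "s = i1")
      case True
      then have "e s \<le> card S" "int (card S) < int (card (K s)) - int \<delta> + 1" using h si by auto
      then show ?thesis by linarith
    next
      case False
      then have "e s = 0" using h s by blast
      then show ?thesis using rr by simp
    qed
  qed
  ultimately have "p \<in> quasi_polys n K \<delta> s d" unfolding quasi_polys_def by blast
  then show ?thesis using p(3,4) unfolding quasi_cart_code_def by blast
qed


theorem mainTheorem5:
  fixes K :: "nat \<Rightarrow> 'a::{field,finite} set"
    and n k l \<delta> s d :: nat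
  assumes "n \<ge> 2"
    and "2 \<le> card (K 1)"
    and "\<forall>i j. 1 \<le> i \<and> i \<le> j \<and> j \<le> n \<longrightarrow> card (K i) \<le> card (K j)"
    and "\<delta> \<ge> 2"
    and "s \<in> {1..n}"
    and "int (card (K s)) - int \<delta> + 1 \<ge> 1"
    and "k < n" and "0 < l" and "l \<le> card (K (k+1)) - 1"
    and "d = (\<Sum>i\<in>{1..k}. (card (K i) - 1)) + l"
  shows
    "let X = cart_points n K;
         m = (\<Prod>i\<in>{1..n}. card (K i));
         r = int (card (K s)) - int \<delta> + 1;
         C = affine_cart_code n K d;
         D = quasi_cart_code n K \<delta> s d;
         \<kappa> = code_dim D;
         B = (card (K (k+1)) - l) * (\<Prod>i\<in>{k+2..n}. card (K i))
     in B = min_dist X C \<and> min_dist X C \<le> min_dist X D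
        \<and> int (min_dist X D) \<le> int m - int \<kappa>
             - (ceiling (real \<kappa> / real_of_int r) - 1) * (int \<delta> - 1) + 1
        \<and> (((k + 2 \<le> n \<and> card (K (k+2)) \<le> card (K s))
            \<or> (card (K s) \<le> card (K (k+1))
               \<and> 0 \<le> int (card (K s)) - (int (card (K (k+1))) - int l)
               \<and> int (card (K s)) - (int (card (K (k+1))) - int l) < r))
           \<longrightarrow> min_dist X D = min_dist X C \<and> min_dist X C = B)"
proof -
  define f where "f i = card (K i)" for i
  have f2: "f i \<ge> 2" if "i \<in> {1..n}" for i using assms(2,3) that unfolding f_def
    by (metis atLeastAtMost_iff le_trans order_refl)
  have mono: "f i \<le> f j" if "1 \<le> i" "i \<le> j" "j \<le> n" for i j using assms(3) that unfolding f_def by blast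
  have KI: "\<forall>i\<in>{1..n}. finite (K i) \<and> K i \<noteq> {}"
  proof
    fix i assume "i \<in> {1..n}"
    then have "card (K i) \<ge> 2" using f2 unfolding f_def by blast
    then show "finite (K i) \<and> K i \<noteq> {}" using card.infinite by force
  qed
  have KI1: "\<forall>i\<in>{1..n}. finite (K i) \<and> card (K i) \<ge> 1" using KI f2 unfolding f_def by fastforce
  define X where "X = cart_points n K"
  define C where "C = affine_cart_code n K d"
  define D where "D = quasi_cart_code n K \<delta> s d"
  define B where "B = (card (K (k+1)) - l) * (\<Prod>i\<in>{k+2..n}. card (K i))"
  define SC where "SC = {hweight X c | c. c \<in> C \<and> (\<exists>x\<in>X. c x \<noteq> 0)}"
  define SD where "SD = {hweight X c | c. c \<in> D \<and> (\<exists>x\<in>X. c x \<noteq> 0)}"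
  have finX: "finite X" unfolding X_def cart_points_def using KI by (intro finite_PiE) auto
  have finSC: "finite SC"
  proof -
    have "SC \<subseteq> {..card X}" unfolding SC_def hweight_def using finX by (auto intro: card_mono)
    then show ?thesis by (rule finite_subset) simp
  qed
  have mdC: "min_dist X C = Min SC" unfolding min_dist_def SC_def ..
  have mdD: "min_dist X D = Min SD" unfolding min_dist_def SD_def ..
  have kn: "k + 1 \<in> {1..n}" using assms(7) by simp
  have lk: "l < f (k+1)" using assms(9) f2[OF kn] unfolding f_def by simp
  have low: "B \<le> w" if wS: "w \<in> SC" for w
  proof -
    obtain c where c: "w = hweight X c" "c \<in> C" "\<exists>x\<in>X. c x \<noteq> 0" using wS unfolding SC_def by blast
    have "G (map (\<lambda>i. card (K i)) (sorted_list_of_set {1..n})) d \<le> hweight X c"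
      unfolding X_def by (rule lowerC[OF KI1 assms(3)]) (use c in \<open>auto simp: C_def X_def\<close>)
    moreover have "G (map (\<lambda>i. card (K i)) (sorted_list_of_set {1..n})) d = B"
      unfolding assms(10) B_def
      by (rule G_B) (use KI1 assms(7,8,9) in auto)
    ultimately show ?thesis using c by simp
  qed
  obtain S where S: "S \<subseteq> K (k+1)" "card S = l"
    using obtain_subset_with_card_n[of l "K (k+1)"] lk unfolding f_def by auto
  have set1: "{1..n} - {1..k} - {k+1} = {k+2..n}" by auto
  have degB: "(\<Sum>i\<in>{1..k}. card (K i) - 1) + card S \<le> d" using S assms(10) by simp
  have BC: "\<exists>c\<in>C. hweight X c = B \<and> (\<exists>x\<in>X. c x \<noteq> 0)"
  proof -
    have A1: "{1..k} \<subseteq> {1..n}" using assms(7) by auto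
    have i1A: "k+1 \<notin> {1..k}" by simp
    have cS: "card S < card (K (k+1))" using S(2) lk unfolding f_def by simp
    show ?thesis using mkcwC[OF KI A1 kn i1A S(1) cS degB] S(2) unfolding set1 C_def X_def B_def by simp
  qed
  have minC: "min_dist X C = B"
  proof -
    have "B \<in> SC" using BC unfolding SC_def by blast
    then show ?thesis unfolding mdC using low finSC by (intro Min_eqI) auto
  qed
  have DC: "D \<subseteq> C" unfolding D_def C_def quasi_cart_code_def affine_cart_code_def quasi_polys_def by auto
  have SDne: "SD \<noteq> {}"
  proof -
    define i1 where "i1 = (if s = 1 then 2 else 1::nat)"
    have i1: "i1 \<in> {1..n}" "i1 \<noteq> s" using assms(1) unfolding i1_def by auto
    have "\<exists>c\<in>D. hweight X c = (card (K i1) - card ({}::'a set)) * (\<Prod>i\<in>{1..n}-{}-{i1}. card (K i))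
           \<and> (\<exists>x\<in>X. c x \<noteq> 0)"
      unfolding D_def X_def
      by (rule mkcwD[OF KI _ i1(1)]) (use i1 assms(5,6) KI f2 in \<open>auto simp: f_def card_gt_0_iff\<close>)
    then show ?thesis unfolding SD_def by blast
  qed
  have CleD: "min_dist X C \<le> min_dist X D"
    unfolding mdC mdD by (rule Min_antimono[OF _ SDne finSC]) (use DC in \<open>auto simp: SC_def SD_def\<close>)
  have sing: "int (min_dist X D) \<le> int (\<Prod>i\<in>{1..n}. card (K i)) - int (code_dim D)
      - (\<lceil>real (code_dim D) / real_of_int (int (card (K s)) - int \<delta> + 1)\<rceil> - 1) * (int \<delta> - 1) + 1"
    unfolding X_def D_def by (rule singleton_bound[OF KI assms(5)]) (use assms(4,6) in auto)
  have eqcase: "min_dist X D = min_dist X C \<and> min_dist X C = B"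
    if cond: "(k + 2 \<le> n \<and> card (K (k+2)) \<le> card (K s))
            \<or> (card (K s) \<le> card (K (k+1))
               \<and> 0 \<le> int (card (K s)) - (int (card (K (k+1))) - int l)
               \<and> int (card (K s)) - (int (card (K (k+1))) - int l) < int (card (K s)) - int \<delta> + 1)"
  proof -
    have "\<exists>c\<in>D. hweight X c = B \<and> (\<exists>x\<in>X. c x \<noteq> 0)"
    proof -
      have sn: "s \<in> {1..n}" by (rule assms(5))
      have rr: "int (card (K s)) - int \<delta> + 1 \<ge> 1" by (rule assms(6))
      have A1: "{1..k} \<subseteq> {1..n}" using assms(7) by auto
      have i1A: "k+1 \<notin> {1..k}" by simp
      have cS: "card S < card (K (k+1))" using S(2) lk unfolding f_def by simp
      have fs2: "card (K s) \<ge> 2" using f2[OF sn] unfolding f_def .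
      have fk2: "card (K (k+1)) \<ge> 2" using f2[OF kn] unfolding f_def .
      have dsum: "d = (\<Sum>i\<in>{1..k}. card (K i) - 1) + l" by (rule assms(10))
      show ?thesis
      proof (cases "k + 2 \<le> s")
        case True
        have sA: "s \<notin> {1..k}" using True by simp
        show ?thesis
          using mkcwD[OF KI A1 kn i1A S(1) cS degB sn sA _ rr] True S(2)
          unfolding set1 D_def X_def B_def by simp
      next
        case False
        show ?thesis
        proof (cases "s = k+1")
          case sk: True
          show ?thesis
          proof (cases "int l < int (card (K s)) - int \<delta> + 1")
            case True
            have sA: "s \<notin> {1..k}" using sk by simp
            show ?thesis
              using mkcwD[OF KI A1 kn i1A S(1) cS degB sn sA _ rr] True S(2) sk
              unfolding set1 D_def X_def B_def by simp
          next
            case False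
            then have ci: "k + 2 \<le> n \<and> card (K (k+2)) \<le> card (K s)" using cond sk by auto
            have kn2: "k+2 \<in> {1..n}" using ci by simp
            have eq: "card (K (k+2)) = card (K (k+1))" using ci sk mono[of "k+1" "k+2"] unfolding f_def by simp
            obtain S2 where S2: "S2 \<subseteq> K (k+2)" "card S2 = l"
              using obtain_subset_with_card_n[of l "K (k+2)"] lk eq unfolding f_def by auto
            have cS2: "card S2 < card (K (k+2))" using S2(2) lk eq unfolding f_def by simp
            have i2A: "k+2 \<notin> {1..k}" by simp
            have degB2: "(\<Sum>i\<in>{1..k}. card (K i) - 1) + card S2 \<le> d" using S2 dsum by simp
            have sA: "s \<notin> {1..k}" using sk by simp
            have set2: "{1..n} - {1..k} - {k+2} = insert (k+1) {k+3..n}" using ci by auto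
            have pr: "(\<Prod>i\<in>{k+2..n}. card (K i)) = card (K (k+2)) * (\<Prod>i\<in>{k+3..n}. card (K i))"
              using ci by (simp add: prod.atLeast_Suc_atMost numeral_3_eq_3)
            have "(card (K (k+2)) - card S2) * (\<Prod>i\<in>{1..n}-{1..k}-{k+2}. card (K i)) = B"
              unfolding set2 B_def pr using S2(2) eq by simp
            then show ?thesis
              using mkcwD[OF KI A1 kn2 i2A S2(1) cS2 degB2 sn sA _ rr] sk
              unfolding D_def X_def by simp
          qed
        next
          case sk: False
          then have sk': "s \<le> k" "s \<in> {1..k}" using False sn by auto
          show ?thesis
          proof (cases "k + 2 \<le> n \<and> card (K (k+2)) \<le> card (K s)")
            case ci: True
            have kn2: "k+2 \<in> {1..n}" using ci by simp
            have eq: "card (K (k+2)) = card (K s)" using ci sk' mono[of s "k+2"] sn unfolding f_def by simp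
            define A' where "A' = insert (k+2) ({1..k} - {s})"
            have A'1: "A' \<subseteq> {1..n}" unfolding A'_def using ci A1 by auto
            have i1A': "k+1 \<notin> A'" unfolding A'_def by simp
            have sA': "s \<notin> A'" unfolding A'_def using sk' by auto
            have s1: "(\<Sum>i\<in>{1..k}. card (K i) - 1) = (card (K s) - 1) + (\<Sum>i\<in>{1..k}-{s}. card (K i) - 1)"
              using sk' by (simp add: sum.remove)
            have s2: "(\<Sum>i\<in>A'. card (K i) - 1) = (card (K (k+2)) - 1) + (\<Sum>i\<in>{1..k}-{s}. card (K i) - 1)"
              unfolding A'_def by (subst sum.insert) auto
            have degB2: "(\<Sum>i\<in>A'. card (K i) - 1) + card S \<le> d" using s1 s2 eq S(2) dsum by simp
            have set2: "{1..n} - A' - {k+1} = insert s {k+3..n}" unfolding A'_def using ci sk' sn by auto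
            have pr: "(\<Prod>i\<in>{k+2..n}. card (K i)) = card (K (k+2)) * (\<Prod>i\<in>{k+3..n}. card (K i))"
              using ci by (simp add: prod.atLeast_Suc_atMost numeral_3_eq_3)
            have "(card (K (k+1)) - card S) * (\<Prod>i\<in>{1..n}-A'-{k+1}. card (K i)) = B"
              unfolding set2 B_def pr using S(2) eq sk' by (simp add: prod.insert)
            then show ?thesis
              using mkcwD[OF KI A'1 kn i1A' S(1) cS degB2 sn sA' _ rr] sk
              unfolding D_def X_def by simp
          next
            case False
            then have cii: "card (K s) \<le> card (K (k+1))"
               "0 \<le> int (card (K s)) - (int (card (K (k+1))) - int l)"
               "int (card (K s)) - (int (card (K (k+1))) - int l) < int (card (K s)) - int \<delta> + 1"
              using cond by auto
            define u where "u = card (K s) + l - card (K (k+1))"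
            have uint: "int u = int (card (K s)) - (int (card (K (k+1))) - int l)" unfolding u_def using cii(2) by simp
            have ulow: "u < card (K s)" unfolding u_def using lk cii(2) unfolding f_def by simp
            obtain S3 where S3: "S3 \<subseteq> K s" "card S3 = u"
              using obtain_subset_with_card_n[of u "K s"] ulow by auto
            have cS3: "card S3 < card (K s)" using S3(2) ulow by simp
            define A' where "A' = insert (k+1) ({1..k} - {s})"
            have A'1: "A' \<subseteq> {1..n}" unfolding A'_def using kn A1 by auto
            have sA': "s \<notin> A'" unfolding A'_def using sk' by auto
            have s1: "(\<Sum>i\<in>{1..k}. card (K i) - 1) = (card (K s) - 1) + (\<Sum>i\<in>{1..k}-{s}. card (K i) - 1)"
              using sk' by (simp add: sum.remove)
            have s2: "(\<Sum>i\<in>A'. card (K i) - 1) = (card (K (k+1)) - 1) + (\<Sum>i\<in>{1..k}-{s}. card (K i) - 1)"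
              unfolding A'_def by (subst sum.insert) auto
            have degB2: "(\<Sum>i\<in>A'. card (K i) - 1) + card S3 \<le> d"
              using s1 s2 S3(2) dsum fs2 fk2 cii(2) unfolding u_def by linarith
            have si: "s = s \<longrightarrow> int (card S3) < int (card (K s)) - int \<delta> + 1" using S3(2) uint cii(3) by simp
            have set2: "{1..n} - A' - {s} = {k+2..n}" unfolding A'_def using sk' sn by auto
            have "(card (K s) - card S3) * (\<Prod>i\<in>{1..n}-A'-{s}. card (K i)) = B"
            proof -
              have "card (K s) - card S3 = card (K (k+1)) - l" using S3(2) cii(2) lk unfolding u_def f_def by linarith
              then show ?thesis unfolding set2 B_def by simp
            qed
            then show ?thesis
              using mkcwD[OF KI A'1 sn sA' S3(1) cS3 degB2 sn sA' si rr]
              unfolding D_def X_def by simp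
          qed
        qed
      qed
    qed
    then obtain c where c: "c \<in> D" "hweight X c = B" "\<exists>x\<in>X. c x \<noteq> 0" by blast
    have "min_dist X D \<le> B" using min_dist_le[OF finX c(1) c(3)] c(2) by simp
    then show ?thesis using CleD minC by simp
  qed
  show ?thesis unfolding Let_def
    using minC CleD sing eqcase unfolding X_def C_def D_def B_def by auto
qed


end
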